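(* Let $n\ge3$, $A$ a commutative ring, $\alpha_k$ a simple root ($k\in\{2,2',3,\dots,n\}$), and $\omega\in PBr(D_n)$, viewed in $Br(D_n,A)$ via $y_\alpha\mapsto y_\alpha^0$. Then there exists $\omega'\in Br(D_n)$, independent of $a$, such that $y_k^a\,\omega=\omega'\,y_k^a$ in $Br(D_n,A)$ for all $a\in A$. Consequently, for every $k$ and every $a\in A$, the element $y_k^a(y_k^0)^{-1}\in Br(D_n,A)$ commutes with every element of $PBr(D_n)$.
   Context: Simple roots of $D_n$: $\alpha_i=-\epsilon_{i-1}+\epsilon_i$ ($2\le i\le n$), $\alpha_{2'}=\epsilon_1+\epsilon_2$; adjacent pairs are $\{2,3\},\{2',3\},\{k,k+1\}$ ($3\le k\le n-1$), ordered by $2<3<\dots<n$ and $2'<3$. Write $y_k^a=y_{\alpha_k}^a$. $Br(D_n,A)$ is generated by $y_k^a$ with relations for $a,b,c\in A$: $y_k^a y_k^0 y_k^b=y_k^0y_k^0y_k^{a+b}$; $y_k^ay_l^b=y_l^by_k^a$ for non-adjacent $k\ne l$; $y_k^ay_l^by_k^c=y_l^cy_k^{b+ac}y_l^a$ for adjacent $k<l$. $Br(D_n)=Br(D_n,0)$ (generators $y_k$, with commutation for non-adjacent and braid relations $y_ky_ly_k=y_ly_ky_l$ for adjacent pairs) is identified with the subgroup generated by the $y_k^0$; $PBr(D_n)$ is the kernel of $Br(D_n)\to W(D_n)$, $y_k\mapsto$ reflection $\sigma_{\alpha_k}$. *)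

theory Defs
  imports Main
begin

text \<open>A word in generators of type 'g: (True, x) is the generator x, (False, x) its inverse.\<close>
type_synonym 'g word = "(bool \<times> 'g) list"

definition winv :: "'g word \<Rightarrow> 'g word" where
  "winv w = rev (map (\<lambda>(b, x). (\<not> b, x)) w)"

inductive pres_eq :: "('g word \<times> 'g word) set \<Rightarrow> 'g word \<Rightarrow> 'g word \<Rightarrow> bool"
  for R where
  refl: "pres_eq R u u"
| sym: "pres_eq R u v \<Longrightarrow> pres_eq R v u"
| trans: "pres_eq R u v \<Longrightarrow> pres_eq R v w \<Longrightarrow> pres_eq R u w"
| cancel: "pres_eq R (u @ [(b, x), (\<not> b, x)] @ v) (u @ v)"
| rel: "(l, r) \<in> R \<Longrightarrow> pres_eq R (u @ l @ v) (u @ r @ v)"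

text \<open>Node N i stands for alpha_i (2 <= i <= n); N2' stands for alpha_{2'}.\<close>
datatype node = N nat | N2'

definition valid :: "nat \<Rightarrow> node \<Rightarrow> bool" where
  "valid n k \<longleftrightarrow> k = N2' \<or> (\<exists>i. k = N i \<and> 2 \<le> i \<and> i \<le> n)"

definition adj_lt :: "nat \<Rightarrow> node \<Rightarrow> node \<Rightarrow> bool" where
  "adj_lt n k l \<longleftrightarrow> (k = N 2 \<and> l = N 3) \<or> (k = N2' \<and> l = N 3)
     \<or> (\<exists>j. 3 \<le> j \<and> j \<le> n - 1 \<and> k = N j \<and> l = N (Suc j))"

definition adjacent :: "nat \<Rightarrow> node \<Rightarrow> node \<Rightarrow> bool" where
  "adjacent n k l \<longleftrightarrow> adj_lt n k l \<or> adj_lt n l k"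

definition y :: "node \<Rightarrow> 'a \<Rightarrow> (node \<times> 'a) word" where
  "y k a = [(True, (k, a))]"

definition BrA_rels :: "nat \<Rightarrow> ((node \<times> 'a::comm_ring_1) word \<times> (node \<times> 'a) word) set" where
  "BrA_rels n =
     {(y k a @ y k 0 @ y k b, y k 0 @ y k 0 @ y k (a + b)) | k a b. valid n k}
   \<union> {(y k a @ y l b, y l b @ y k a) | k l a b.
        valid n k \<and> valid n l \<and> k \<noteq> l \<and> \<not> adjacent n k l}
   \<union> {(y k a @ y l b @ y k c, y l c @ y k (b + a * c) @ y l a) | k l a b c.
        adj_lt n k l}"

definition BrA_eq :: "nat \<Rightarrow> (node \<times> 'a::comm_ring_1) word \<Rightarrow> (node \<times> 'a) word \<Rightarrow> bool" where
  "BrA_eq n = pres_eq (BrA_rels n)"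

text \<open>Elements of Br(D_n) are given by words in the generators y_k; they are viewed
  in Br(D_n, A) via y_k \<mapsto> y_k^0.\<close>
definition emb :: "node word \<Rightarrow> (node \<times> 'a::zero) word" where
  "emb w = map (\<lambda>(b, k). (b, (k, 0))) w"

definition Br_word :: "nat \<Rightarrow> node word \<Rightarrow> bool" where
  "Br_word n w \<longleftrightarrow> (\<forall>x \<in> set w. valid n (snd x))"

text \<open>Roots as integer vectors (coordinates 1..n, indexed by nat).\<close>
definition root :: "node \<Rightarrow> nat \<Rightarrow> int" where
  "root k = (case k of
      N i \<Rightarrow> (\<lambda>j. if j = i then 1 else if j = i - 1 then -1 else 0)
    | N2' \<Rightarrow> (\<lambda>j. if j = 1 \<or> j = 2 then 1 else 0))"

text \<open>Reflection sigma_alpha(v) = v - (v . alpha) alpha (all roots have norm^2 = 2).\<close>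
definition refl :: "nat \<Rightarrow> node \<Rightarrow> (nat \<Rightarrow> int) \<Rightarrow> (nat \<Rightarrow> int)" where
  "refl n k v = (\<lambda>j. v j - (\<Sum>i\<in>{1..n}. v i * root k i) * root k j)"

text \<open>Image in W(D_n) of a word (each reflection is an involution, so inverses map to
  the same reflection).\<close>
definition to_W :: "nat \<Rightarrow> node word \<Rightarrow> (nat \<Rightarrow> int) \<Rightarrow> (nat \<Rightarrow> int)" where
  "to_W n w = foldr (\<lambda>(b, k) f. refl n k \<circ> f) w id"

definition in_PBr :: "nat \<Rightarrow> node word \<Rightarrow> bool" where
  "in_PBr n w \<longleftrightarrow> Br_word n w \<and> to_W n w = id"

end

theory Submission
  imports Defs "HOL-Algebra.Group"
begin

locale brA = group G for G :: "('g, 'b) monoid_scheme" (structure) +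
  fixes n :: nat and yy :: "node \<Rightarrow> 'a::comm_ring_1 \<Rightarrow> 'g"
  assumes yy_closed [simp]: "yy k a \<in> carrier G"
    and R1: "valid n k \<Longrightarrow> yy k a \<otimes> yy k 0 \<otimes> yy k b = yy k 0 \<otimes> yy k 0 \<otimes> yy k (a + b)"
    and R2: "\<lbrakk>valid n k; valid n l; k \<noteq> l; \<not> adjacent n k l\<rbrakk> \<Longrightarrow> yy k a \<otimes> yy l b = yy l b \<otimes> yy k a"
    and R3: "adj_lt n k l \<Longrightarrow> yy k a \<otimes> yy l b \<otimes> yy k c = yy l c \<otimes> yy k (b + a * c) \<otimes> yy l a"
    and n3: "3 \<le> n"
begin

lemma cancel1[simp]: "x \<in> carrier G \<Longrightarrow> w \<in> carrier G \<Longrightarrow> x \<otimes> (inv x \<otimes> w) = w"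
  by (simp flip: m_assoc)
lemma cancel2[simp]: "x \<in> carrier G \<Longrightarrow> w \<in> carrier G \<Longrightarrow> inv x \<otimes> (x \<otimes> w) = w"
  by (simp flip: m_assoc)

definition cj :: "'g \<Rightarrow> 'g \<Rightarrow> 'g" where "cj g z = g \<otimes> z \<otimes> inv g"

abbreviation S :: "node \<Rightarrow> 'g" where "S k \<equiv> yy k 0"
definition X :: "node \<Rightarrow> 'a \<Rightarrow> 'g" where "X k a = yy k a \<otimes> inv (S k)"

lemma X_closed[simp]: "X k a \<in> carrier G" by (simp add: X_def)

lemma cj_closed[simp]: "g \<in> carrier G \<Longrightarrow> z \<in> carrier G \<Longrightarrow> cj g z \<in> carrier G"
  by (simp add: cj_def)

lemma cj_cj: "g \<in> carrier G \<Longrightarrow> h \<in> carrier G \<Longrightarrow> z \<in> carrier G \<Longrightarrow> cj g (cj h z) = cj (g \<otimes> h) z"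
  by (simp add: cj_def m_assoc inv_mult_group)

lemma cj_inv1[simp]: "g \<in> carrier G \<Longrightarrow> z \<in> carrier G \<Longrightarrow> cj (inv g) (cj g z) = z"
  by (simp add: cj_def m_assoc inv_mult_group)

lemma cj_inv2[simp]: "g \<in> carrier G \<Longrightarrow> z \<in> carrier G \<Longrightarrow> cj g (cj (inv g) z) = z"
  by (simp add: cj_def m_assoc inv_mult_group)

lemma cj_one[simp]: "z \<in> carrier G \<Longrightarrow> cj \<one> z = z"
  by (simp add: cj_def)

lemma cj_mult: "g \<in> carrier G \<Longrightarrow> z \<in> carrier G \<Longrightarrow> w \<in> carrier G \<Longrightarrow> cj g (z \<otimes> w) = cj g z \<otimes> cj g w"
  by (simp add: cj_def m_assoc inv_mult_group)

lemma cj_inv_arg: "g \<in> carrier G \<Longrightarrow> z \<in> carrier G \<Longrightarrow> cj g (inv z) = inv (cj g z)"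
  by (simp add: cj_def m_assoc inv_mult_group)

lemma cj_eq_swap: "g \<in> carrier G \<Longrightarrow> z \<in> carrier G \<Longrightarrow> cj g z = w \<Longrightarrow> cj (inv g) w = z"
  by auto

lemma cj_fix_iff: "g \<in> carrier G \<Longrightarrow> z \<in> carrier G \<Longrightarrow> cj g z = z \<longleftrightarrow> g \<otimes> z = z \<otimes> g"
  unfolding cj_def by (metis inv_closed inv_solve_right' m_closed)

lemma cj_fix_inv: "g \<in> carrier G \<Longrightarrow> z \<in> carrier G \<Longrightarrow> cj g z = z \<Longrightarrow> cj (inv g) z = z"
  by (metis cj_inv1)

lemma cj_swap_comm: "g \<in> carrier G \<Longrightarrow> h \<in> carrier G \<Longrightarrow> z \<in> carrier G \<Longrightarrow> g \<otimes> h = h \<otimes> g \<Longrightarrow> cj g (cj h z) = cj h (cj g z)"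
  by (simp add: cj_cj)

end


context group
begin

lemma cancel1'[simp]: "x \<in> carrier G \<Longrightarrow> w \<in> carrier G \<Longrightarrow> x \<otimes> (inv x \<otimes> w) = w"
  by (simp flip: m_assoc)
lemma cancel2'[simp]: "x \<in> carrier G \<Longrightarrow> w \<in> carrier G \<Longrightarrow> inv x \<otimes> (x \<otimes> w) = w"
  by (simp flip: m_assoc)

lemma solve_mid: "a \<in> carrier G \<Longrightarrow> b \<in> carrier G \<Longrightarrow> x \<in> carrier G \<Longrightarrow> c \<in> carrier G \<Longrightarrow>
   a \<otimes> x \<otimes> b = c \<Longrightarrow> x = inv a \<otimes> c \<otimes> inv b"
  by (auto simp: m_assoc)

lemma braid_inv1:
  assumes s: "s \<in> carrier G" and t: "t \<in> carrier G" and br: "s \<otimes> t \<otimes> s = t \<otimes> s \<otimes> t"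
  shows "inv t \<otimes> s \<otimes> t = s \<otimes> t \<otimes> inv s"
proof -
  have "t \<otimes> (s \<otimes> t \<otimes> inv s) = s \<otimes> t"
    using br s t by (metis inv_closed m_assoc m_closed r_inv r_one)
  then show ?thesis using s t by (metis inv_solve_left m_assoc m_closed inv_closed)
qed

lemma braid_sq:
  assumes s: "s \<in> carrier G" and t: "t \<in> carrier G" and br: "s \<otimes> t \<otimes> s = t \<otimes> s \<otimes> t"
  shows "inv t \<otimes> (s \<otimes> s) \<otimes> t = s \<otimes> (t \<otimes> t) \<otimes> inv s"
proof -
  have e: "inv t \<otimes> s \<otimes> t = s \<otimes> t \<otimes> inv s" by (rule braid_inv1[OF s t br])
  have "inv t \<otimes> (s \<otimes> s) \<otimes> t = (inv t \<otimes> s \<otimes> t) \<otimes> (inv t \<otimes> s \<otimes> t)"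
    using s t by (simp add: m_assoc)
  also have "\<dots> = (s \<otimes> t \<otimes> inv s) \<otimes> (s \<otimes> t \<otimes> inv s)" by (simp add: e)
  also have "\<dots> = s \<otimes> (t \<otimes> t) \<otimes> inv s" using s t by (simp add: m_assoc)
  finally show ?thesis .
qed

end


context group
begin
lemma solve_left3: "a \<in> carrier G \<Longrightarrow> b \<in> carrier G \<Longrightarrow> c \<in> carrier G \<Longrightarrow> d \<in> carrier G \<Longrightarrow>
   a \<otimes> b \<otimes> c = d \<Longrightarrow> a = d \<otimes> inv c \<otimes> inv b"
  by (auto simp: m_assoc)

lemma BRD:
  assumes s: "s \<in> carrier G" and t: "t \<in> carrier G" and br: "s \<otimes> t \<otimes> s = t \<otimes> s \<otimes> t"
  shows "t \<otimes> inv s \<otimes> inv t = inv t \<otimes> inv s \<otimes> inv t \<otimes> s \<otimes> s"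
proof -
  have e: "inv t \<otimes> (s \<otimes> s) \<otimes> t = s \<otimes> (t \<otimes> t) \<otimes> inv s" by (rule braid_sq[OF s t br])
  have "inv t \<otimes> inv s \<otimes> inv t \<otimes> s \<otimes> s = inv t \<otimes> inv s \<otimes> (inv t \<otimes> (s \<otimes> s) \<otimes> t) \<otimes> inv t"
    using s t by (simp add: m_assoc)
  also have "\<dots> = inv t \<otimes> inv s \<otimes> (s \<otimes> (t \<otimes> t) \<otimes> inv s) \<otimes> inv t" by (simp add: e)
  also have "\<dots> = t \<otimes> inv s \<otimes> inv t" using s t by (simp add: m_assoc)
  finally show ?thesis by simp
qed
end

context brA
begin

lemma cj_eqI: "g \<in> carrier G \<Longrightarrow> z \<in> carrier G \<Longrightarrow> w \<in> carrier G \<Longrightarrow> g \<otimes> z = w \<otimes> g \<Longrightarrow> cj g z = w"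
  unfolding cj_def by (simp add: m_assoc)

lemma cj_X: "g \<in> carrier G \<Longrightarrow> cj g (yy k a) = u \<Longrightarrow> cj g (S k) = v \<Longrightarrow> cj g (X k a) = u \<otimes> inv v"
  unfolding X_def by (metis cj_inv_arg cj_mult inv_closed yy_closed)

lemma rel_i: "adj_lt n k l \<Longrightarrow> yy k a \<otimes> S l \<otimes> S k = S l \<otimes> S k \<otimes> yy l a"
  using R3[of k l a 0 0] by simp
lemma rel_ii: "adj_lt n k l \<Longrightarrow> S k \<otimes> S l \<otimes> yy k c = yy l c \<otimes> S k \<otimes> S l"
  using R3[of k l 0 0 c] by simp
lemma rel_iii: "adj_lt n k l \<Longrightarrow> S k \<otimes> yy l b \<otimes> S k = S l \<otimes> yy k b \<otimes> S l"
  using R3[of k l 0 b 0] by simp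
lemma braid_lt: "adj_lt n k l \<Longrightarrow> S k \<otimes> S l \<otimes> S k = S l \<otimes> S k \<otimes> S l"
  using R3[of k l 0 0 0] by simp
lemma braid: "adjacent n p q \<Longrightarrow> S p \<otimes> S q \<otimes> S p = S q \<otimes> S p \<otimes> S q"
  unfolding adjacent_def using braid_lt by metis

lemma L2_lt1: assumes "adj_lt n k l" shows "cj (S l \<otimes> S k) (X l a) = X k a"
proof -
  have "cj (S l \<otimes> S k) (yy l a) = yy k a"
    by (rule cj_eqI) (use rel_i[OF assms, of a] in \<open>simp_all add: m_assoc\<close>)
  moreover have "cj (S l \<otimes> S k) (S l) = S k"
    by (rule cj_eqI) (use braid_lt[OF assms] in \<open>simp_all add: m_assoc\<close>)
  ultimately show ?thesis by (simp add: cj_mult cj_inv_arg X_def)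
qed

lemma L2_lt2: assumes "adj_lt n k l" shows "cj (S k \<otimes> S l) (X k a) = X l a"
proof -
  have "cj (S k \<otimes> S l) (yy k a) = yy l a"
    by (rule cj_eqI) (use rel_ii[OF assms, of a] in \<open>simp_all add: m_assoc\<close>)
  moreover have "cj (S k \<otimes> S l) (S k) = S l"
    by (rule cj_eqI) (use braid_lt[OF assms] in \<open>simp_all add: m_assoc\<close>)
  ultimately show ?thesis by (simp add: cj_mult cj_inv_arg X_def)
qed

lemma L2: "adjacent n p q \<Longrightarrow> cj (S q \<otimes> S p) (X q a) = X p a"
  unfolding adjacent_def using L2_lt1 L2_lt2 by blast

lemma L3a: assumes A: "adj_lt n k l" shows "cj (S k \<otimes> S k) (X l a) = X l a"
proof -
  let ?s = "S k" and ?t = "S l" and ?yk = "yy k a" and ?yl = "yy l a"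
  have e1: "?yl = inv ?s \<otimes> (?t \<otimes> ?yk \<otimes> ?t) \<otimes> inv ?s"
    by (rule solve_mid) (use rel_iii[OF A, of a] in simp_all)
  have e2: "?yl = ?s \<otimes> ?t \<otimes> ?yk \<otimes> inv ?t \<otimes> inv ?s"
    using rel_ii[OF A, of a] by (simp add: m_assoc)
  have brd: "?t \<otimes> inv ?s \<otimes> inv ?t = inv ?t \<otimes> inv ?s \<otimes> inv ?t \<otimes> ?s \<otimes> ?s"
    by (rule BRD) (use braid_lt[OF A] in simp_all)
  have "?s \<otimes> ?s \<otimes> (?yl \<otimes> inv ?t) = ?s \<otimes> ?t \<otimes> ?yk \<otimes> (?t \<otimes> inv ?s \<otimes> inv ?t)"
    by (subst e1) (simp add: m_assoc)
  also have "\<dots> = ?s \<otimes> ?t \<otimes> ?yk \<otimes> (inv ?t \<otimes> inv ?s \<otimes> inv ?t \<otimes> ?s \<otimes> ?s)" by (simp only: brd)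
  also have "\<dots> = (?yl \<otimes> inv ?t) \<otimes> (?s \<otimes> ?s)"
    by (subst e2) (simp add: m_assoc)
  finally show ?thesis unfolding X_def by (intro cj_eqI) simp_all
qed

lemma L3b: assumes A: "adj_lt n k l" shows "cj (S l \<otimes> S l) (X k a) = X k a"
proof -
  let ?s = "S k" and ?t = "S l" and ?yk = "yy k a" and ?yl = "yy l a"
  have e1: "?yk = inv ?t \<otimes> (?s \<otimes> ?yl \<otimes> ?s) \<otimes> inv ?t"
    by (rule solve_mid) (use rel_iii[OF A, of a] in simp_all)
  have e2: "?yk = ?t \<otimes> ?s \<otimes> ?yl \<otimes> inv ?s \<otimes> inv ?t"
    using rel_i[OF A, of a] by (intro solve_left3) simp_all
  have brd: "?s \<otimes> inv ?t \<otimes> inv ?s = inv ?s \<otimes> inv ?t \<otimes> inv ?s \<otimes> ?t \<otimes> ?t"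
    by (rule BRD) (use braid_lt[OF A] in simp_all)
  have "?t \<otimes> ?t \<otimes> (?yk \<otimes> inv ?s) = ?t \<otimes> ?s \<otimes> ?yl \<otimes> (?s \<otimes> inv ?t \<otimes> inv ?s)"
    by (subst e1) (simp add: m_assoc)
  also have "\<dots> = ?t \<otimes> ?s \<otimes> ?yl \<otimes> (inv ?s \<otimes> inv ?t \<otimes> inv ?s \<otimes> ?t \<otimes> ?t)" by (simp only: brd)
  also have "\<dots> = (?yk \<otimes> inv ?s) \<otimes> (?t \<otimes> ?t)"
    by (subst e2) (simp add: m_assoc)
  finally show ?thesis unfolding X_def by (intro cj_eqI) simp_all
qed

lemma L3: "adjacent n p q \<Longrightarrow> cj (S q \<otimes> S q) (X p a) = X p a"
  unfolding adjacent_def using L3a L3b by blast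

lemma L3self: assumes "valid n k" shows "cj (S k \<otimes> S k) (X k a) = X k a"
proof -
  have "cj (S k \<otimes> S k) (yy k a) = yy k a"
    by (rule cj_eqI) (use R1[OF assms, of a 0] in \<open>simp_all add: m_assoc\<close>)
  moreover have "cj (S k \<otimes> S k) (S k) = S k"
    by (rule cj_eqI) (simp_all add: m_assoc)
  ultimately show ?thesis by (simp add: cj_mult cj_inv_arg X_def)
qed

lemma CM_yy: "\<lbrakk>valid n k; valid n l; k \<noteq> l; \<not> adjacent n k l\<rbrakk> \<Longrightarrow> cj (S k) (yy l b) = yy l b"
  by (rule cj_eqI) (use R2[of k l 0 b] in simp_all)

lemma CM_S: "\<lbrakk>valid n k; valid n l; k \<noteq> l; \<not> adjacent n k l\<rbrakk> \<Longrightarrow> S k \<otimes> S l = S l \<otimes> S k"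
  using R2[of k l 0 0] by simp

lemma CM_X: "\<lbrakk>valid n k; valid n l; k \<noteq> l; \<not> adjacent n k l\<rbrakk> \<Longrightarrow> cj (S k) (X l a) = X l a"
  using CM_yy[of k l] by (simp add: cj_mult cj_inv_arg X_def)

lemma adjacent_sym: "adjacent n p q \<Longrightarrow> adjacent n q p"
  unfolding adjacent_def by blast

lemma sqconj:
  assumes A: "adjacent n p q" and Z: "Z \<in> carrier G"
    and h: "cj (S q \<otimes> S q) (cj (inv (S p)) Z) = cj (inv (S p)) Z"
  shows "cj (S p \<otimes> S p) (cj (S q) Z) = cj (S q) Z"
proof -
  have bs: "inv (S q) \<otimes> (S p \<otimes> S p) \<otimes> S q = S p \<otimes> (S q \<otimes> S q) \<otimes> inv (S p)"
    by (rule braid_sq) (use braid[OF A] in simp_all)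
  have e: "S p \<otimes> S p \<otimes> S q = S q \<otimes> (S p \<otimes> (S q \<otimes> S q) \<otimes> inv (S p))"
    by (subst bs[symmetric]) (simp add: m_assoc)
  have "cj (S p \<otimes> S p) (cj (S q) Z) = cj (S q) (cj (S p) (cj (S q \<otimes> S q) (cj (inv (S p)) Z)))"
    using Z by (simp add: cj_cj e m_assoc)
  also have "\<dots> = cj (S q) Z" using Z by (simp only: h) simp
  finally show ?thesis .
qed

lemma NEGX: assumes A: "adjacent n p q"
  shows "cj (S p \<otimes> S p) (cj (S q) (X q a)) = cj (S q) (X q a)"
proof (rule sqconj[OF A])
  have e: "cj (inv (S p)) (X q a) = cj (S q) (X p a)"
  proof -
    have "cj (S p \<otimes> S q) (X p a) = X q a" by (rule L2[OF adjacent_sym[OF A]])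
    then have "cj (inv (S p)) (X q a) = cj (inv (S p)) (cj (S p) (cj (S q) (X p a)))"
      by (simp add: cj_cj)
    then show ?thesis by simp
  qed
  show "cj (S q \<otimes> S q) (cj (inv (S p)) (X q a)) = cj (inv (S p)) (X q a)"
  proof -
    have "cj (S q \<otimes> S q) (cj (S q) (X p a)) = cj (S q) (cj (S q \<otimes> S q) (X p a))"
      by (simp add: cj_cj m_assoc)
    also have "\<dots> = cj (S q) (X p a)" using L3[OF A, of a] by simp
    finally show ?thesis unfolding e .
  qed
qed simp

end


definition fsi :: "node \<Rightarrow> nat \<times> bool \<Rightarrow> nat \<times> bool" where
  "fsi m p = (case m of N k \<Rightarrow> (if fst p = k then (k - 1, snd p) else if fst p = k - 1 then (k, snd p) else p)
      | N2' \<Rightarrow> (if fst p = 1 then (2, \<not> snd p) else if fst p = 2 then (1, \<not> snd p) else p))"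

definition act :: "node \<Rightarrow> nat \<times> nat \<times> bool \<times> bool \<Rightarrow> nat \<times> nat \<times> bool \<times> bool" where
  "act m t = (case t of (j, i, \<sigma>, \<tau>) \<Rightarrow> (case fsi m (j, \<sigma>) of (j', \<sigma>') \<Rightarrow> (case fsi m (i, \<tau>) of (i', \<tau>') \<Rightarrow>
      if i' < j' then (j', i', \<sigma>', \<tau>') else (i', j', \<tau>', \<sigma>'))))"

lemma act_simp: "act m (j, i, \<sigma>, \<tau>) = (let (j', \<sigma>') = fsi m (j, \<sigma>); (i', \<tau>') = fsi m (i, \<tau>) in
      if i' < j' then (j', i', \<sigma>', \<tau>') else (i', j', \<tau>', \<sigma>'))"
  unfolding act_def by (simp add: Let_def split: prod.split)

lemma act_NJ_down: "i + 1 < j \<Longrightarrow> act (N j) (j, i, \<sigma>, \<tau>) = (j - 1, i, \<sigma>, \<tau>)"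
  by (auto simp: act_simp fsi_def)
lemma act_up: "i < j \<Longrightarrow> act (N (Suc j)) (j, i, \<sigma>, \<tau>) = (Suc j, i, \<sigma>, \<tau>)"
  by (auto simp: act_simp fsi_def)
lemma act_swap: "2 \<le> j \<Longrightarrow> act (N j) (j, j - 1, \<sigma>, \<tau>) = (j, j - 1, \<tau>, \<sigma>)"
  by (auto simp: act_simp fsi_def)
lemma act_Jm1_top: "3 \<le> j \<Longrightarrow> act (N (j - 1)) (j, j - 1, \<sigma>, \<tau>) = (j, j - 2, \<sigma>, \<tau>)"
  by (auto simp: act_simp fsi_def)
lemma act_Jm1_lift: "3 \<le> j \<Longrightarrow> act (N (j - 1)) (j, j - 2, \<sigma>, \<tau>) = (j, j - 1, \<sigma>, \<tau>)"
  by (auto simp: act_simp fsi_def)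
lemma act_Jm1_fix: "i + 2 < j \<Longrightarrow> act (N (j - 1)) (j, i, \<sigma>, \<tau>) = (j, i, \<sigma>, \<tau>)"
  by (auto simp: act_simp fsi_def)
lemma act_low: "fsi m (j, \<sigma>) = (j, \<sigma>) \<Longrightarrow> fsi m (i, \<tau>) = (i', \<tau>') \<Longrightarrow> i' < j \<Longrightarrow> act m (j, i, \<sigma>, \<tau>) = (j, i', \<sigma>, \<tau>')"
  by (simp add: act_simp)
lemma act_2'_base: "act N2' (2, 1, \<sigma>, \<tau>) = (2, 1, \<not> \<tau>, \<not> \<sigma>)"
  by (auto simp: act_simp fsi_def)
lemma act_2'_31: "act N2' (3, 1, \<sigma>, \<tau>) = (3, 2, \<sigma>, \<not> \<tau>)"
  by (auto simp: act_simp fsi_def)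
lemma act_2'_32: "act N2' (3, 2, \<sigma>, \<tau>) = (3, 1, \<sigma>, \<not> \<tau>)"
  by (auto simp: act_simp fsi_def)
lemma act_fix_far: "k \<ge> j + 2 \<Longrightarrow> i < j \<Longrightarrow> act (N k) (j, i, \<sigma>, \<tau>) = (j, i, \<sigma>, \<tau>)"
  by (auto simp: act_simp fsi_def)

lemma fsi_fst_le: "fst (fsi m (c, s)) \<le> max (Suc c) 2"
  by (auto simp: fsi_def split: node.split)
lemma fsi_fst_Suc: "fst (fsi m (c, s)) = Suc c \<Longrightarrow> c \<ge> 2 \<Longrightarrow> m = N (Suc c)"
  by (cases m) (auto simp: fsi_def split: if_splits)
lemma fsi_fst_Suc1: "fst (fsi m (1, s)) = 2 \<Longrightarrow> m = N 2 \<or> m = N2'"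
  by (cases m) (auto simp: fsi_def split: if_splits)

lemma act_fst: "fst (act m (j, i, \<sigma>, \<tau>)) = max (fst (fsi m (j, \<sigma>))) (fst (fsi m (i, \<tau>)))"
  by (simp add: act_simp split: prod.split)

lemma act_step1:
  assumes "i < j" "j < J" "fst (act m (j, i, \<sigma>, \<tau>)) \<le> J" "3 \<le> J"
  shows "fst (act m (j, i, \<sigma>, \<tau>)) < J \<or> (m = N J \<and> j = J - 1)"
proof (rule ccontr)
  assume c: "\<not> ?thesis"
  then have eq: "fst (act m (j, i, \<sigma>, \<tau>)) = J" using assms(3) by simp
  have fj: "fst (fsi m (j, \<sigma>)) \<le> max (Suc j) 2" and fi: "fst (fsi m (i, \<tau>)) \<le> max (Suc i) 2"
    by (rule fsi_fst_le)+
  from eq have "fst (fsi m (j, \<sigma>)) = J \<or> fst (fsi m (i, \<tau>)) = J" by (simp add: act_fst max_def split: if_splits)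
  then show False
  proof
    assume h: "fst (fsi m (j, \<sigma>)) = J"
    with fj assms have "J = Suc j" by auto
    with h assms have "m = N J" using fsi_fst_Suc[of m j \<sigma>] by (cases "j \<ge> 2") auto
    with c \<open>J = Suc j\<close> show False by simp
  next
    assume h: "fst (fsi m (i, \<tau>)) = J"
    with fi assms show False by auto
  qed
qed


lemma valid_N[simp]: "valid n (N k) \<longleftrightarrow> 2 \<le> k \<and> k \<le> n" by (auto simp: valid_def)
lemma valid_2'[simp]: "valid n N2'" by (simp add: valid_def)
lemma adjN1: "2 \<le> k \<Longrightarrow> Suc k \<le> n \<Longrightarrow> adjacent n (N k) (N (Suc k))"
  by (auto simp: adjacent_def adj_lt_def)
lemma adjN2: "2 \<le> k \<Longrightarrow> Suc k \<le> n \<Longrightarrow> adjacent n (N (Suc k)) (N k)"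
  using adjN1 unfolding adjacent_def by blast
lemma nadjN: "l \<noteq> Suc k \<Longrightarrow> k \<noteq> Suc l \<Longrightarrow> \<not> adjacent n (N k) (N l)"
  by (auto simp: adjacent_def adj_lt_def)
lemma adj2'1: "adjacent n N2' (N 3)" by (auto simp: adjacent_def adj_lt_def)
lemma adj2'2: "adjacent n (N 3) N2'" by (auto simp: adjacent_def adj_lt_def)
lemma nadj2'1: "l \<noteq> 3 \<Longrightarrow> \<not> adjacent n N2' (N l)" by (auto simp: adjacent_def adj_lt_def)
lemma nadj2'2: "l \<noteq> 3 \<Longrightarrow> \<not> adjacent n (N l) N2'" by (auto simp: adjacent_def adj_lt_def)

context brA
begin

fun Yf :: "nat \<Rightarrow> nat \<Rightarrow> bool \<Rightarrow> bool \<Rightarrow> 'a \<Rightarrow> 'g" where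
  "Yf 0 i \<sigma> \<tau> a = \<one>"
| "Yf (Suc 0) i \<sigma> \<tau> a = \<one>"
| "Yf (Suc (Suc 0)) i \<sigma> \<tau> a = (if i = 1 then
     (if \<sigma> \<and> \<not> \<tau> then X (N 2) a else if \<not> \<sigma> \<and> \<tau> then cj (S (N 2)) (X (N 2) a)
      else if \<sigma> then X N2' a else cj (S N2') (X N2' a)) else \<one>)"
| "Yf (Suc (Suc (Suc m))) i \<sigma> \<tau> a = (if i < Suc (Suc m) then cj (S (N (Suc (Suc (Suc m))))) (Yf (Suc (Suc m)) i \<sigma> \<tau> a)
     else if i = Suc (Suc m) then
       (if \<sigma> \<and> \<not> \<tau> then X (N (Suc (Suc (Suc m)))) a
        else if \<not> \<sigma> \<and> \<tau> then cj (S (N (Suc (Suc (Suc m))))) (X (N (Suc (Suc (Suc m)))) a)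
        else cj (S (N (Suc (Suc m))) \<otimes> S (N (Suc (Suc (Suc m))))) (Yf (Suc (Suc m)) (Suc m) \<sigma> \<sigma> a))
     else \<one>)"

lemma Yf_closed[simp]: "Yf j i \<sigma> \<tau> a \<in> carrier G"
  by (induction j i \<sigma> \<tau> a rule: Yf.induct) auto

definition Yt :: "nat \<times> nat \<times> bool \<times> bool \<Rightarrow> 'a \<Rightarrow> 'g" where
  "Yt t a = (case t of (j, i, \<sigma>, \<tau>) \<Rightarrow> Yf j i \<sigma> \<tau> a)"

lemma Yt_simp[simp]: "Yt (j, i, \<sigma>, \<tau>) a = Yf j i \<sigma> \<tau> a" by (simp add: Yt_def)

lemma Yf_2: "Yf 2 i \<sigma> \<tau> a = (if i = 1 then
     (if \<sigma> \<and> \<not> \<tau> then X (N 2) a else if \<not> \<sigma> \<and> \<tau> then cj (S (N 2)) (X (N 2) a)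
      else if \<sigma> then X N2' a else cj (S N2') (X N2' a)) else \<one>)"
  by (simp add: numeral_2_eq_2)

lemma Yf_ge3: assumes "3 \<le> j" shows "Yf j i \<sigma> \<tau> a = (if i < j - 1 then cj (S (N j)) (Yf (j - 1) i \<sigma> \<tau> a)
     else if i = j - 1 then
       (if \<sigma> \<and> \<not> \<tau> then X (N j) a
        else if \<not> \<sigma> \<and> \<tau> then cj (S (N j)) (X (N j) a)
        else cj (S (N (j - 1)) \<otimes> S (N j)) (Yf (j - 1) (j - 2) \<sigma> \<sigma> a))
     else \<one>)"
proof -
  obtain m where "j = Suc (Suc (Suc m))" using assms by (metis add.commute add_Suc_right le_Suc_ex numeral_3_eq_3 plus_1_eq_Suc)
  then show ?thesis by (simp add: numeral_2_eq_2)
qed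

lemma Y_rec: "3 \<le> j \<Longrightarrow> i < j - 1 \<Longrightarrow> Yf j i \<sigma> \<tau> a = cj (S (N j)) (Yf (j - 1) i \<sigma> \<tau> a)"
  by (simp add: Yf_ge3)
lemma Y_TF: "2 \<le> j \<Longrightarrow> Yf j (j - 1) True False a = X (N j) a"
  by (cases "j = 2") (auto simp: Yf_ge3 Yf_2)
lemma Y_FT: "2 \<le> j \<Longrightarrow> Yf j (j - 1) False True a = cj (S (N j)) (X (N j) a)"
  by (cases "j = 2") (auto simp: Yf_ge3 Yf_2)
lemma Y_eq: "3 \<le> j \<Longrightarrow> Yf j (j - 1) \<sigma> \<sigma> a = cj (S (N (j - 1)) \<otimes> S (N j)) (Yf (j - 1) (j - 2) \<sigma> \<sigma> a)"
  by (simp add: Yf_ge3)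
lemma Y_TT: "Yf 2 1 True True a = X N2' a" by (simp add: Yf_2)
lemma Y_FF: "Yf 2 1 False False a = cj (S N2') (X N2' a)" by (simp add: Yf_2)

lemma commNN_S: "2 \<le> k \<Longrightarrow> k \<le> n \<Longrightarrow> 2 \<le> l \<Longrightarrow> l \<le> n \<Longrightarrow> k \<noteq> l \<Longrightarrow> l \<noteq> Suc k \<Longrightarrow> k \<noteq> Suc l \<Longrightarrow>
   S (N k) \<otimes> S (N l) = S (N l) \<otimes> S (N k)"
  by (rule CM_S) (auto simp: nadjN)
lemma commNN_X: "2 \<le> k \<Longrightarrow> k \<le> n \<Longrightarrow> 2 \<le> l \<Longrightarrow> l \<le> n \<Longrightarrow> k \<noteq> l \<Longrightarrow> l \<noteq> Suc k \<Longrightarrow> k \<noteq> Suc l \<Longrightarrow>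
   cj (S (N k)) (X (N l) a) = X (N l) a"
  by (rule CM_X) (auto simp: nadjN)
lemma comm2'N_S: "2 \<le> l \<Longrightarrow> l \<le> n \<Longrightarrow> l \<noteq> 3 \<Longrightarrow> S N2' \<otimes> S (N l) = S (N l) \<otimes> S N2'"
  by (rule CM_S) (auto simp: nadj2'1)
lemma comm2'N_X: "2 \<le> l \<Longrightarrow> l \<le> n \<Longrightarrow> l \<noteq> 3 \<Longrightarrow> cj (S N2') (X (N l) a) = X (N l) a"
  by (rule CM_X) (auto simp: nadj2'1)
lemma commN2'_X: "2 \<le> l \<Longrightarrow> l \<le> n \<Longrightarrow> l \<noteq> 3 \<Longrightarrow> cj (S (N l)) (X N2' a) = X N2' a"
  by (rule CM_X) (auto simp: nadj2'2)

lemma cj_commute_S: "g \<in> carrier G \<Longrightarrow> h \<in> carrier G \<Longrightarrow> z \<in> carrier G \<Longrightarrow> g \<otimes> h = h \<otimes> g \<Longrightarrow> cj g h = h"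
  by (simp add: cj_fix_iff)

lemma cj_one_arg[simp]: "g \<in> carrier G \<Longrightarrow> cj g \<one> = \<one>"
  by (simp add: cj_def)

lemma cj_comm_fix: "g \<in> carrier G \<Longrightarrow> h \<in> carrier G \<Longrightarrow> z \<in> carrier G \<Longrightarrow> g \<otimes> h = h \<otimes> g \<Longrightarrow> cj g z = z \<Longrightarrow> cj g (cj h z) = cj h z"
  by (metis cj_swap_comm)

lemma SUP: "2 \<le> j \<Longrightarrow> j + 2 \<le> k \<Longrightarrow> k \<le> n \<Longrightarrow> cj (S (N k)) (Yf j i \<sigma> \<tau> a) = Yf j i \<sigma> \<tau> a"
proof (induction j arbitrary: i \<sigma> \<tau> rule: less_induct)
  case (less j)
  show ?case
  proof (cases "j = 2")
    case True
    have c1: "cj (S (N k)) (X (N 2) a) = X (N 2) a" by (rule commNN_X) (use less.prems True in auto)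
    have c2: "S (N k) \<otimes> S (N 2) = S (N 2) \<otimes> S (N k)" by (rule commNN_S) (use less.prems True in auto)
    have c3: "cj (S (N k)) (X N2' a) = X N2' a" by (rule commN2'_X) (use less.prems True in auto)
    have c4: "S (N k) \<otimes> S N2' = S N2' \<otimes> S (N k)" using comm2'N_S[of k] less.prems True by auto
    show ?thesis using True c1 c2 c3 c4 by (auto simp: Yf_2 cj_comm_fix)
  next
    case False
    then have j3: "3 \<le> j" using less.prems by simp
    have c1: "cj (S (N k)) (X (N j) a) = X (N j) a" by (rule commNN_X) (use less.prems j3 in auto)
    have c2: "S (N k) \<otimes> S (N j) = S (N j) \<otimes> S (N k)" by (rule commNN_S) (use less.prems j3 in auto)
    have c3: "S (N k) \<otimes> S (N (j - 1)) = S (N (j - 1)) \<otimes> S (N k)" by (rule commNN_S) (use less.prems j3 in auto)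
    have IH: "\<And>i \<sigma> \<tau>. cj (S (N k)) (Yf (j - 1) i \<sigma> \<tau> a) = Yf (j - 1) i \<sigma> \<tau> a"
      using less.IH[of "j - 1"] less.prems j3 by auto
    have c23: "S (N k) \<otimes> (S (N (j - 1)) \<otimes> S (N j)) = (S (N (j - 1)) \<otimes> S (N j)) \<otimes> S (N k)"
      using c2 c3 by (simp add: m_assoc flip: m_assoc) (simp add: m_assoc)
    show ?thesis using j3 c1 c2 IH c23
      by (auto simp: Yf_ge3[OF j3] cj_comm_fix)
  qed
qed

end


lemma fsi_ge1: "1 \<le> c \<Longrightarrow> valid n m \<Longrightarrow> 1 \<le> fst (fsi m (c, s))"
  by (cases m) (auto simp: fsi_def)

context brA
begin

definition QQ :: "nat \<Rightarrow> bool" where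
  "QQ J \<longleftrightarrow> (\<forall>j i \<sigma> \<tau> m a. 1 \<le> i \<longrightarrow> i < j \<longrightarrow> j \<le> J \<longrightarrow> valid n m \<longrightarrow> fst (act m (j, i, \<sigma>, \<tau>)) \<le> J \<longrightarrow>
      cj (S m) (Yf j i \<sigma> \<tau> a) = Yt (act m (j, i, \<sigma>, \<tau>)) a)"

lemma QQ_use: "QQ J \<Longrightarrow> 1 \<le> i \<Longrightarrow> i < j \<Longrightarrow> j \<le> J \<Longrightarrow> valid n m \<Longrightarrow> act m (j, i, \<sigma>, \<tau>) = (j', i', \<sigma>', \<tau>') \<Longrightarrow> j' \<le> J \<Longrightarrow>
   cj (S m) (Yf j i \<sigma> \<tau> a) = Yf j' i' \<sigma>' \<tau>' a"
  unfolding QQ_def by (metis Yt_simp fst_conv)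

lemma QQ_inv: "QQ J \<Longrightarrow> 1 \<le> i \<Longrightarrow> i < j \<Longrightarrow> j \<le> J \<Longrightarrow> valid n m \<Longrightarrow> act m (j, i, \<sigma>, \<tau>) = (j', i', \<sigma>', \<tau>') \<Longrightarrow> j' \<le> J \<Longrightarrow>
   cj (inv (S m)) (Yf j' i' \<sigma>' \<tau>' a) = Yf j i \<sigma> \<tau> a"
  using QQ_use[of J i j m \<sigma> \<tau> j' i' \<sigma>' \<tau>' a] by (metis cj_inv1 Yf_closed yy_closed)

lemma sq_from: "cj g z = w \<Longrightarrow> cj g w = z \<Longrightarrow> g \<in> carrier G \<Longrightarrow> z \<in> carrier G \<Longrightarrow> cj (g \<otimes> g) z = z"
  by (simp add: cj_cj[symmetric])

lemma cj3: "a \<in> carrier G \<Longrightarrow> b \<in> carrier G \<Longrightarrow> c \<in> carrier G \<Longrightarrow> z \<in> carrier G \<Longrightarrow>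
  cj a (cj b (cj c z)) = cj (a \<otimes> (b \<otimes> c)) z"
  by (simp add: cj_cj)

lemma braid_cj: "adjacent n p q \<Longrightarrow> z \<in> carrier G \<Longrightarrow>
  cj (S p) (cj (S q) (cj (S p) z)) = cj (S q) (cj (S p) (cj (S q) z))"
  using braid[of p q] by (simp add: cj3 m_assoc)

lemma SQ3: assumes A: "adjacent n p q" and vq: "valid n q"
  shows "cj (S q \<otimes> S q) (cj (S p) (X q a)) = cj (S p) (X q a)"
proof (rule sqconj[OF adjacent_sym[OF A]])
  have e: "cj (inv (S q)) (X q a) = cj (S q) (X q a)"
  proof -
    have "X q a = cj (S q) (cj (S q) (X q a))" using L3self[OF vq, of a] by (simp add: cj_cj)
    then show ?thesis by (metis cj_inv1 X_closed yy_closed cj_closed)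
  qed
  show "cj (S p \<otimes> S p) (cj (inv (S q)) (X q a)) = cj (inv (S q)) (X q a)"
    unfolding e by (rule NEGX[OF A])
qed simp

lemma LIFT: assumes J: "3 \<le> J" "J \<le> n"
  shows "cj (S (N (J - 1))) (cj (S (N J)) (Yf (J - 1) (J - 2) \<sigma> \<tau> a)) = Yf J (J - 1) \<sigma> \<tau> a"
proof -
  obtain K where K: "J = Suc K" using J by (cases J) auto
  have K2: "2 \<le> K" "Suc K \<le> n" using J K by auto
  have adj: "adjacent n (N (Suc K)) (N K)" using adjN2[OF K2] .
  have adj': "adjacent n (N K) (N (Suc K))" using adjacent_sym[OF adj] .
  have TF: "Yf K (K - 1) True False a = X (N K) a" using Y_TF[of K a] K2 by simp
  have FT: "Yf K (K - 1) False True a = cj (S (N K)) (X (N K) a)" using Y_FT[of K a] K2 by simp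
  have TF': "Yf (Suc K) K True False a = X (N (Suc K)) a" using Y_TF[of "Suc K" a] K2 by simp
  have FT': "Yf (Suc K) K False True a = cj (S (N (Suc K))) (X (N (Suc K)) a)" using Y_FT[of "Suc K" a] K2 by simp
  have EQ: "Yf (Suc K) K \<sigma> \<sigma> a = cj (S (N K) \<otimes> S (N (Suc K))) (Yf K (K - 1) \<sigma> \<sigma> a)"
    using Y_eq[of "Suc K" \<sigma> a] K2 by simp
  have "cj (S (N K)) (cj (S (N (Suc K))) (Yf K (K - 1) \<sigma> \<tau> a)) = Yf (Suc K) K \<sigma> \<tau> a"
  proof -
    consider "\<sigma> \<and> \<not> \<tau>" | "\<not> \<sigma> \<and> \<tau>" | "\<sigma> = \<tau>" by blast
    then show ?thesis
    proof cases
      case 1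
      then show ?thesis using L2[OF adj, of a] TF TF' by (simp add: cj_cj)
    next
      case 2
      have "cj (S (N K)) (cj (S (N (Suc K))) (cj (S (N K)) (X (N K) a)))
          = cj (S (N (Suc K))) (cj (S (N K)) (cj (S (N (Suc K))) (X (N K) a)))"
        by (rule braid_cj[OF adj']) simp
      also have "\<dots> = cj (S (N (Suc K))) (X (N (Suc K)) a)" using L2[OF adj, of a] by (simp add: cj_cj)
      finally show ?thesis using 2 FT FT' by simp
    next
      case 3
      then show ?thesis using EQ by (simp add: cj_cj)
    qed
  qed
  then show ?thesis using K by (simp add: numeral_2_eq_2)
qed

lemma sq_comm: "a \<in> carrier G \<Longrightarrow> b \<in> carrier G \<Longrightarrow> a \<otimes> b = b \<otimes> a \<Longrightarrow> (a \<otimes> a) \<otimes> b = b \<otimes> (a \<otimes> a)"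
  by (metis m_assoc)

lemma adj23: "adjacent n (N 2) (N 3)" using adjN1[of 2 n] n3 by (simp add: numeral_3_eq_3)
lemma adj32: "adjacent n (N 3) (N 2)" using adjacent_sym[OF adj23] .

lemma Y21: "Yf 2 1 True True a = X N2' a" "Yf 2 1 False False a = cj (S N2') (X N2' a)"
  "Yf 2 1 True False a = X (N 2) a" "Yf 2 1 False True a = cj (S (N 2)) (X (N 2) a)"
  by (simp_all add: Yf_2)
lemma Y32: "Yf 3 2 True False a = X (N 3) a" "Yf 3 2 False True a = cj (S (N 3)) (X (N 3) a)"
  "Yf 3 2 \<sigma> \<sigma> a = cj (S (N 2) \<otimes> S (N 3)) (Yf 2 1 \<sigma> \<sigma> a)"
  using Y_TF[of 3 a] Y_FT[of 3 a] Y_eq[of 3 \<sigma> a] by simp_all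

lemma c2'2: "S N2' \<otimes> S (N 2) = S (N 2) \<otimes> S N2'"
  using comm2'N_S[of 2] n3 by simp

lemma D3: "cj (S N2') (cj (S (N 3)) (Yf 2 1 \<sigma> \<tau> a)) = Yf 3 2 \<sigma> (\<not> \<tau>) a"
proof -
  have v3: "valid n (N 3)" using n3 by simp
  have L2a: "cj (S N2' \<otimes> S (N 3)) (X N2' a) = X (N 3) a" using L2[OF adj2'2] .
  have L2b: "cj (S (N 3) \<otimes> S (N 2)) (X (N 3) a) = X (N 2) a" using L2[OF adj23] .
  have L2c: "cj (S (N 3) \<otimes> S N2') (X (N 3) a) = X N2' a" using L2[OF adj2'1] .
  have sq1: "cj (S (N 3) \<otimes> S (N 3)) (cj (S (N 2)) (X (N 3) a)) = cj (S (N 2)) (X (N 3) a)"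
    by (rule SQ3[OF adj23 v3])
  have sq2: "cj (S (N 3) \<otimes> S (N 3)) (cj (S N2') (X (N 3) a)) = cj (S N2') (X (N 3) a)"
    by (rule SQ3[OF adj2'1 v3])
  have l3: "cj (S (N 2) \<otimes> S (N 2)) (X (N 3) a) = X (N 3) a" by (rule L3[OF adj32])
  have l3': "cj (S N2' \<otimes> S N2') (X (N 3) a) = X (N 3) a" by (rule L3[OF adj2'2])
  have comm: "cj (S N2') (cj (S (N 2)) Z) = cj (S (N 2)) (cj (S N2') Z)" if "Z \<in> carrier G" for Z
    using that c2'2 by (simp add: cj_swap_comm)
  consider "\<sigma>" "\<tau>" | "\<not> \<sigma>" "\<not> \<tau>" | "\<sigma>" "\<not> \<tau>" | "\<not> \<sigma>" "\<tau>" by blast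
  then show ?thesis
  proof cases
    case 1
    then show ?thesis using L2a Y21 Y32 by (simp add: cj_cj)
  next
    case 2
    have "cj (S N2') (cj (S (N 3)) (cj (S N2') (X N2' a))) = cj (S (N 3)) (cj (S N2') (cj (S (N 3)) (X N2' a)))"
      by (rule braid_cj[OF adj2'1]) simp
    also have "\<dots> = cj (S (N 3)) (X (N 3) a)" using L2a by (simp add: cj_cj)
    finally show ?thesis using 2 Y21 Y32 by simp
  next
    case 3
    have "cj (S N2') (cj (S (N 3)) (X (N 2) a)) = cj (S N2') (cj (S (N 3) \<otimes> S (N 3)) (cj (S (N 2)) (X (N 3) a)))"
      by (simp only: L2b[symmetric]) (simp add: cj_cj m_assoc)
    also have "\<dots> = cj (S N2') (cj (S (N 2)) (X (N 3) a))" by (simp only: sq1)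
    also have "\<dots> = cj (S (N 2)) (cj (S N2') (X (N 3) a))" by (simp add: comm)
    also have "\<dots> = cj (S (N 2)) (cj (S (N 3) \<otimes> S (N 3)) (cj (S N2') (X (N 3) a)))" by (simp only: sq2)
    also have "\<dots> = cj (S (N 2) \<otimes> S (N 3)) (X N2' a)" by (simp only: L2c[symmetric]) (simp add: cj_cj m_assoc)
    finally show ?thesis using 3 Y21 Y32 by simp
  next
    case 4
    have "cj (S N2') (cj (S (N 3)) (cj (S (N 2)) (X (N 2) a)))
        = cj (S N2') (cj (S (N 3)) (cj (S (N 2)) (cj (S (N 3)) (cj (S (N 2)) (X (N 3) a)))))"
      by (simp only: L2b[symmetric]) (simp add: cj_cj m_assoc)
    also have "\<dots> = cj (S N2') (cj (S (N 2)) (cj (S (N 3)) (cj (S (N 2)) (cj (S (N 2)) (X (N 3) a)))))"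
      by (simp add: braid_cj[OF adj32])
    also have "\<dots> = cj (S N2') (cj (S (N 2)) (cj (S (N 3)) (X (N 3) a)))"
      using l3 by (simp add: cj_cj)
    also have "\<dots> = cj (S (N 2)) (cj (S N2') (cj (S (N 3)) (X (N 3) a)))" by (simp add: comm)
    also have "\<dots> = cj (S (N 2)) (cj (S N2') (cj (S (N 3)) (cj (S N2') (cj (S N2') (X (N 3) a)))))"
      using l3' by (simp add: cj_cj)
    also have "\<dots> = cj (S (N 2)) (cj (S (N 3)) (cj (S N2') (cj (S (N 3)) (cj (S N2') (X (N 3) a)))))"
      by (simp add: braid_cj[OF adj2'2])
    also have "\<dots> = cj (S (N 2) \<otimes> S (N 3)) (cj (S N2') (X N2' a))"
      by (simp only: L2c[symmetric]) (simp add: cj_cj m_assoc)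
    finally show ?thesis using 4 Y21 Y32 by simp
  qed
qed

end


context brA
begin

lemma SQup:
  assumes K: "2 \<le> K" "Suc K \<le> n" and Q: "QQ K" and i: "1 \<le> i" "i < K"
  shows "cj (S (N (Suc K)) \<otimes> S (N (Suc K))) (Yf K i \<sigma> \<tau> a) = Yf K i \<sigma> \<tau> a"
proof -
  have adj1: "adjacent n (N (Suc K)) (N K)" by (rule adjN2[OF K])
  have adj2: "adjacent n (N K) (N (Suc K))" by (rule adjN1[OF K])
  show ?thesis
  proof (cases "i < K - 1")
    case True
    then obtain L where L: "K = Suc L" "2 \<le> L" using K i by (cases K) auto
    have YK: "Yf (Suc L) i \<sigma> \<tau> a = cj (S (N (Suc L))) (Yf L i \<sigma> \<tau> a)"
      using Y_rec[of "Suc L" i \<sigma> \<tau> a] L True by simp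
    have h1: "cj (S (N (Suc (Suc L)))) (Yf L i \<sigma> \<tau> a) = Yf L i \<sigma> \<tau> a"
      by (rule SUP) (use L K in auto)
    have h2: "cj (S (N (Suc L))) (Yf L i \<sigma> \<tau> a) = Yf (Suc L) i \<sigma> \<tau> a"
      by (rule QQ_use[OF Q]) (use L i True K in \<open>auto simp: act_up\<close>)
    have h3: "cj (S (N (Suc L))) (Yf (Suc L) i \<sigma> \<tau> a) = Yf L i \<sigma> \<tau> a"
      by (rule QQ_use[OF Q]) (use L i True K in \<open>auto simp: act_NJ_down\<close>)
    have h4: "cj (S (N (Suc L)) \<otimes> S (N (Suc L))) (Yf L i \<sigma> \<tau> a) = Yf L i \<sigma> \<tau> a"
      by (rule sq_from[OF h2 h3]) simp_all
    have "cj (S (N (Suc K)) \<otimes> S (N (Suc K))) (cj (S (N K)) (Yf L i \<sigma> \<tau> a)) = cj (S (N K)) (Yf L i \<sigma> \<tau> a)"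
      by (rule sqconj[OF adj1]) (use h4 cj_fix_inv[OF _ _ h1] L in simp_all)
    then show ?thesis using YK L by simp
  next
    case False
    then have ieq: "i = K - 1" using i by simp
    consider "\<sigma> \<and> \<not> \<tau>" | "\<not> \<sigma> \<and> \<tau>" | "\<sigma> = \<tau>" by blast
    then show ?thesis
    proof cases
      case 1
      then show ?thesis using ieq Y_TF[of K a] K L3[OF adj2, of a] by simp
    next
      case 2
      then show ?thesis using ieq Y_FT[of K a] K NEGX[OF adj1, of a] by simp
    next
      case 3
      show ?thesis
      proof (cases "K = 2")
        case True
        have e1: "cj (S (N 3) \<otimes> S (N 3)) (X N2' a) = X N2' a" by (rule L3[OF adj2'1])
        have e2: "cj (S (N 3) \<otimes> S (N 3)) (cj (S N2') (X N2' a)) = cj (S N2') (X N2' a)" by (rule NEGX[OF adj2'2])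
        show ?thesis using True ieq 3 e1 e2 Y21 by (cases \<tau>) (simp_all add: numeral_3_eq_3 numeral_2_eq_2)
      next
        case False
        then obtain L where L: "K = Suc L" "2 \<le> L" using K by (cases K) auto
        let ?Z = "Yf L (L - 1) \<sigma> \<sigma> a"
        have YK: "Yf (Suc L) L \<sigma> \<sigma> a = cj (S (N L) \<otimes> S (N (Suc L))) ?Z"
          using Y_eq[of "Suc L" \<sigma> a] L by simp
        have h1: "cj (S (N (Suc (Suc L)))) ?Z = ?Z"
          by (rule SUP) (use L K in auto)
        have h2: "cj (S (N (Suc L))) ?Z = Yf (Suc L) (L - 1) \<sigma> \<sigma> a"
          by (rule QQ_use[OF Q]) (use L K in \<open>auto simp: act_up\<close>)
        have h3: "cj (S (N (Suc L))) (Yf (Suc L) (L - 1) \<sigma> \<sigma> a) = ?Z"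
          by (rule QQ_use[OF Q]) (use L K in \<open>auto simp: act_NJ_down\<close>)
        have h4: "cj (S (N (Suc L)) \<otimes> S (N (Suc L))) ?Z = ?Z"
          by (rule sq_from[OF h2 h3]) simp_all
        have h5: "cj (S (N (Suc K)) \<otimes> S (N (Suc K))) (cj (S (N K)) ?Z) = cj (S (N K)) ?Z"
          by (rule sqconj[OF adj1]) (use h4 cj_fix_inv[OF _ _ h1] L in simp_all)
        have cm: "(S (N (Suc K)) \<otimes> S (N (Suc K))) \<otimes> S (N L) = S (N L) \<otimes> (S (N (Suc K)) \<otimes> S (N (Suc K)))"
          by (rule sq_comm) (use commNN_S[of "Suc K" L] L K in auto)
        have "cj (S (N (Suc K)) \<otimes> S (N (Suc K))) (cj (S (N L) \<otimes> S (N (Suc L))) ?Z)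
            = cj (S (N L)) (cj (S (N (Suc K)) \<otimes> S (N (Suc K))) (cj (S (N K)) ?Z))"
          using cm L by (simp add: cj_cj[symmetric] cj_swap_comm)
        also have "\<dots> = cj (S (N L) \<otimes> S (N (Suc L))) ?Z" using h5 L by (simp add: cj_cj)
        finally show ?thesis using YK L ieq 3 by simp
      qed
    qed
  qed
qed

lemma QQ2: "QQ 2"
  unfolding QQ_def
proof (intro allI impI)
  fix j i \<sigma> \<tau> m a
  assume h: "1 \<le> i" "i < j" "j \<le> (2::nat)" "valid n m" "fst (act m (j, i, \<sigma>, \<tau>)) \<le> 2"
  then have ji: "j = 2" "i = 1" by auto
  show "cj (S m) (Yf j i \<sigma> \<tau> a) = Yt (act m (j, i, \<sigma>, \<tau>)) a"
  proof (cases m)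
    case (N k)
    then have k: "2 \<le> k" "k \<le> n" using h by auto
    consider "k = 2" | "k = 3" | "4 \<le> k" using k by linarith
    then show ?thesis
    proof cases
      case 1
      have act: "act m (j, i, \<sigma>, \<tau>) = (2, 1, \<tau>, \<sigma>)" using act_swap[of 2 \<sigma> \<tau>] N 1 ji by simp
      have l3: "cj (S (N 2)) (cj (S (N 2)) (X (N 2) a)) = X (N 2) a" using L3self[of "N 2" a] k 1 by (simp add: cj_cj)
      have c1: "cj (S (N 2)) (X N2' a) = X N2' a" using commN2'_X[of 2 a] n3 by simp
      have c2: "cj (S (N 2)) (cj (S N2') (X N2' a)) = cj (S N2') (X N2' a)"
        by (rule cj_comm_fix) (use c1 c2'2 in simp_all)
      show ?thesis using act N 1 ji l3 c1 c2 Y21 by (cases \<sigma>; cases \<tau>) simp_all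
    next
      case 2
      have "act m (j, i, \<sigma>, \<tau>) = (3, 1, \<sigma>, \<tau>)" using act_up[of 1 2 \<sigma> \<tau>] N 2 ji by (simp add: numeral_3_eq_3)
      then show ?thesis using h by simp
    next
      case 3
      have "act m (j, i, \<sigma>, \<tau>) = (j, i, \<sigma>, \<tau>)" using act_fix_far[of j k i] N 3 ji by simp
      moreover have "cj (S m) (Yf j i \<sigma> \<tau> a) = Yf j i \<sigma> \<tau> a" using SUP[of j k i \<sigma> \<tau> a] N 3 ji k by simp
      ultimately show ?thesis by simp
    qed
  next
    case N2'
    have act: "act m (j, i, \<sigma>, \<tau>) = (2, 1, \<not> \<tau>, \<not> \<sigma>)" using act_2'_base N2' ji by simp
    have l3: "cj (S N2') (cj (S N2') (X N2' a)) = X N2' a" using L3self[of "N2'" a] by (simp add: cj_cj)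
    have c1: "cj (S N2') (X (N 2) a) = X (N 2) a" using comm2'N_X[of 2 a] n3 by simp
    have c2: "cj (S N2') (cj (S (N 2)) (X (N 2) a)) = cj (S (N 2)) (X (N 2) a)"
      by (rule cj_comm_fix) (use c1 c2'2 in simp_all)
    show ?thesis using act N2' ji l3 c1 c2 Y21 by (cases \<sigma>; cases \<tau>) simp_all
  qed
qed

end


lemma fsi_low_N: "2 \<le> k \<Longrightarrow> k + 1 \<le> c \<Longrightarrow> fsi (N k) (c, s) = (c, s)"
  by (auto simp: fsi_def)
lemma fsi_low_2': "3 \<le> c \<Longrightarrow> fsi N2' (c, s) = (c, s)"
  by (auto simp: fsi_def)
lemma fsi_bound_N: "2 \<le> k \<Longrightarrow> k < K \<Longrightarrow> i < K \<Longrightarrow> fst (fsi (N k) (i, s)) < K"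
  by (auto simp: fsi_def)
lemma fsi_bound_2': "3 \<le> K \<Longrightarrow> i < K \<Longrightarrow> fst (fsi N2' (i, s)) < K"
  by (auto simp: fsi_def)

context brA
begin

lemma braid_conj_inv: assumes A: "adjacent n p q" and z: "z \<in> carrier G"
  shows "cj (S p) (cj (inv (S q)) z) = cj (inv (S q)) (cj (inv (S p)) (cj (S q) (cj (S p) z)))"
proof -
  have b: "inv (S p) \<otimes> S q \<otimes> S p = S q \<otimes> S p \<otimes> inv (S q)"
    by (rule braid_inv1) (use braid[OF adjacent_sym[OF A]] in simp_all)
  have e: "S p \<otimes> inv (S q) = inv (S q) \<otimes> (inv (S p) \<otimes> (S q \<otimes> S p))"
  proof -
    have "inv (S q) \<otimes> (inv (S p) \<otimes> (S q \<otimes> S p)) = inv (S q) \<otimes> (S q \<otimes> S p \<otimes> inv (S q))"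
      using b by (simp add: m_assoc)
    also have "\<dots> = S p \<otimes> inv (S q)" by (simp add: m_assoc)
    finally show ?thesis by simp
  qed
  show ?thesis using z by (simp add: cj_cj e m_assoc)
qed

lemma Step2_low:
  assumes K: "2 \<le> K" "Suc K \<le> n" and Q: "QQ K" and vm: "valid n m"
    and f1: "fsi m (Suc K, \<sigma>) = (Suc K, \<sigma>)" and f2: "fsi m (K, \<sigma>) = (K, \<sigma>)"
    and f3: "fsi m (i, \<tau>) = (i', \<tau>')" and i': "1 \<le> i'" "i' < K" and i: "1 \<le> i" "i < K"
    and cm: "S m \<otimes> S (N (Suc K)) = S (N (Suc K)) \<otimes> S m"
  shows "cj (S m) (Yf (Suc K) i \<sigma> \<tau> a) = Yf (Suc K) i' \<sigma> \<tau>' a \<and> act m (Suc K, i, \<sigma>, \<tau>) = (Suc K, i', \<sigma>, \<tau>')"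
proof
  show "act m (Suc K, i, \<sigma>, \<tau>) = (Suc K, i', \<sigma>, \<tau>')" by (rule act_low[OF f1 f3]) (use i' in simp)
  have a2: "act m (K, i, \<sigma>, \<tau>) = (K, i', \<sigma>, \<tau>')" by (rule act_low[OF f2 f3]) (use i' in simp)
  have Y1: "Yf (Suc K) i \<sigma> \<tau> a = cj (S (N (Suc K))) (Yf K i \<sigma> \<tau> a)" using Y_rec[of "Suc K" i] K i by simp
  have Y2: "Yf (Suc K) i' \<sigma> \<tau>' a = cj (S (N (Suc K))) (Yf K i' \<sigma> \<tau>' a)" using Y_rec[of "Suc K" i'] K i' by simp
  have q: "cj (S m) (Yf K i \<sigma> \<tau> a) = Yf K i' \<sigma> \<tau>' a" by (rule QQ_use[OF Q _ _ _ vm a2]) (use i in auto)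
  show "cj (S m) (Yf (Suc K) i \<sigma> \<tau> a) = Yf (Suc K) i' \<sigma> \<tau>' a"
  proof -
    have "cj (S m) (cj (S (N (Suc K))) (Yf K i \<sigma> \<tau> a)) = cj (S (N (Suc K))) (cj (S m) (Yf K i \<sigma> \<tau> a))"
      by (rule cj_swap_comm) (simp_all add: cm)
    then show ?thesis using Y1 Y2 q by simp
  qed
qed

lemma Step2:
  assumes K: "2 \<le> K" "Suc K \<le> n" and Q: "QQ K" and vm: "valid n m" and i: "1 \<le> i" "i < K"
    and fa: "fst (act m (Suc K, i, \<sigma>, \<tau>)) \<le> Suc K"
  shows "cj (S m) (Yf (Suc K) i \<sigma> \<tau> a) = Yt (act m (Suc K, i, \<sigma>, \<tau>)) a"
proof -
  have Y1: "Yf (Suc K) i \<sigma> \<tau> a = cj (S (N (Suc K))) (Yf K i \<sigma> \<tau> a)" using Y_rec[of "Suc K" i] K i by simp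
  show ?thesis
  proof (cases m)
    case (N k)
    then have k: "2 \<le> k" "k \<le> n" using vm by auto
    consider "K + 3 \<le> k" | "k = Suc (Suc K)" | "k = Suc K" | "k = K" | "k < K" by linarith
    then show ?thesis
    proof cases
      case 1
      then show ?thesis using N SUP[of "Suc K" k i \<sigma> \<tau> a] act_fix_far[of "Suc K" k i \<sigma> \<tau>] K k i by simp
    next
      case 2
      then show ?thesis using N act_up[of i "Suc K" \<sigma> \<tau>] fa i by simp
    next
      case 3
      have act: "act m (Suc K, i, \<sigma>, \<tau>) = (K, i, \<sigma>, \<tau>)" using N 3 act_NJ_down[of i "Suc K" \<sigma> \<tau>] i by simp
      have "cj (S (N (Suc K))) (cj (S (N (Suc K))) (Yf K i \<sigma> \<tau> a)) = Yf K i \<sigma> \<tau> a"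
        using SQup[OF K Q i] by (simp add: cj_cj)
      then show ?thesis using act Y1 N 3 by simp
    next
      case 4
      have adj: "adjacent n (N K) (N (Suc K))" by (rule adjN1[OF K])
      show ?thesis
      proof (cases "i < K - 1")
        case True
        then obtain L where L: "K = Suc L" "2 \<le> L" using K i by (cases K) auto
        have act: "act m (Suc K, i, \<sigma>, \<tau>) = (Suc K, i, \<sigma>, \<tau>)" using N 4 act_Jm1_fix[of i "Suc K" \<sigma> \<tau>] True by simp
        have Y2: "Yf K i \<sigma> \<tau> a = cj (S (N K)) (Yf L i \<sigma> \<tau> a)" using Y_rec[of K i] L True by simp
        have sp: "cj (S (N (Suc K))) (Yf L i \<sigma> \<tau> a) = Yf L i \<sigma> \<tau> a" by (rule SUP) (use L K in auto)
        have "cj (S (N K)) (cj (S (N (Suc K))) (cj (S (N K)) (Yf L i \<sigma> \<tau> a)))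
            = cj (S (N (Suc K))) (cj (S (N K)) (cj (S (N (Suc K))) (Yf L i \<sigma> \<tau> a)))"
          by (rule braid_cj[OF adj]) simp
        then show ?thesis using act Y1 Y2 sp N 4 by simp
      next
        case False
        then have ieq: "i = K - 1" using i by simp
        have act: "act m (Suc K, i, \<sigma>, \<tau>) = (Suc K, K, \<sigma>, \<tau>)"
          using N 4 act_Jm1_lift[of "Suc K" \<sigma> \<tau>] ieq K by (simp add: numeral_2_eq_2)
        have "cj (S (N (Suc K - 1))) (cj (S (N (Suc K))) (Yf (Suc K - 1) (Suc K - 2) \<sigma> \<tau> a)) = Yf (Suc K) (Suc K - 1) \<sigma> \<tau> a"
          by (rule LIFT) (use K in auto)
        then show ?thesis using act Y1 N 4 ieq by (simp add: numeral_2_eq_2)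
      qed
    next
      case 5
      obtain i' \<tau>' where f3: "fsi (N k) (i, \<tau>) = (i', \<tau>')" by fastforce
      have i': "1 \<le> i'" "i' < K" using fsi_ge1[of i n "N k" \<tau>] fsi_bound_N[of k K i \<tau>] f3 k 5 i by auto
      have r: "cj (S m) (Yf (Suc K) i \<sigma> \<tau> a) = Yf (Suc K) i' \<sigma> \<tau>' a \<and> act m (Suc K, i, \<sigma>, \<tau>) = (Suc K, i', \<sigma>, \<tau>')"
        by (rule Step2_low[OF K Q vm _ _ _ i' i]) (use N k 5 K f3 commNN_S[of k "Suc K"] in \<open>auto intro: fsi_low_N\<close>)
      then show ?thesis by simp
    qed
  next
    case N2'
    show ?thesis
    proof (cases "K = 2")
      case True
      then have i1: "i = 1" using i by simp
      have act: "act m (Suc K, i, \<sigma>, \<tau>) = (3, 2, \<sigma>, \<not> \<tau>)" using act_2'_31 N2' True i1 by (simp add: numeral_3_eq_3)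
      have "cj (S N2') (cj (S (N 3)) (Yf 2 1 \<sigma> \<tau> a)) = Yf 3 2 \<sigma> (\<not> \<tau>) a" by (rule D3)
      then show ?thesis using act Y1 N2' True i1 by (simp add: numeral_3_eq_3)
    next
      case False
      then have K3: "3 \<le> K" using K by simp
      obtain i' \<tau>' where f3: "fsi N2' (i, \<tau>) = (i', \<tau>')" by fastforce
      have i': "1 \<le> i'" "i' < K" using fsi_ge1[of i n "N2'" \<tau>] fsi_bound_2'[OF K3, of i \<tau>] f3 i by auto
      have r: "cj (S m) (Yf (Suc K) i \<sigma> \<tau> a) = Yf (Suc K) i' \<sigma> \<tau>' a \<and> act m (Suc K, i, \<sigma>, \<tau>) = (Suc K, i', \<sigma>, \<tau>')"
        by (rule Step2_low[OF K Q vm _ _ _ i' i]) (use N2' K3 K f3 comm2'N_S[of "Suc K"] in \<open>auto intro: fsi_low_2'\<close>)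
      then show ?thesis by simp
    qed
  qed
qed

end


context brA
begin

lemma Step3_K:
  assumes K: "2 \<le> K" "Suc K \<le> n" and Q: "QQ K"
  shows "cj (S (N K)) (Yf (Suc K) K \<sigma> \<tau> a) = Yf (Suc K) (K - 1) \<sigma> \<tau> a"
proof -
  let ?Z = "Yf K (K - 1) \<sigma> \<tau> a"
  have adj: "adjacent n (N K) (N (Suc K))" by (rule adjN1[OF K])
  have Yt: "Yf (Suc K) (K - 1) \<sigma> \<tau> a = cj (S (N (Suc K))) ?Z" using Y_rec[of "Suc K" "K - 1" \<sigma> \<tau> a] K by simp
  have Li: "cj (S (N K)) (cj (S (N (Suc K))) ?Z) = Yf (Suc K) K \<sigma> \<tau> a"
    using LIFT[of "Suc K" \<sigma> \<tau> a] K by (simp add: numeral_2_eq_2)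
  have iv: "cj (inv (S (N K))) ?Z = Yf K (K - 1) \<tau> \<sigma> a"
    by (rule QQ_inv[OF Q]) (use K act_swap[of K \<tau> \<sigma>] in auto)
  have sq: "cj (S (N (Suc K)) \<otimes> S (N (Suc K))) (Yf K (K - 1) \<tau> \<sigma> a) = Yf K (K - 1) \<tau> \<sigma> a"
    by (rule SQup[OF K Q]) (use K in auto)
  have "cj (S (N K) \<otimes> S (N K)) (cj (S (N (Suc K))) ?Z) = cj (S (N (Suc K))) ?Z"
    by (rule sqconj[OF adj]) (use iv sq in simp_all)
  moreover have "cj (S (N K)) (cj (S (N K)) (cj (S (N (Suc K))) ?Z)) = cj (S (N K) \<otimes> S (N K)) (cj (S (N (Suc K))) ?Z)"
    by (rule cj_cj) simp_all
  ultimately show ?thesis using Li Yt by metis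
qed

lemma Step3_fix:
  assumes K: "2 \<le> K" "Suc K \<le> n" and Q: "QQ K" and vm: "valid n m"
    and cmK: "S m \<otimes> S (N K) = S (N K) \<otimes> S m" and cmSK: "S m \<otimes> S (N (Suc K)) = S (N (Suc K)) \<otimes> S m"
    and cX: "cj (S m) (X (N (Suc K)) a) = X (N (Suc K)) a"
    and fixZ: "\<And>\<rho>. act m (K, K - 1, \<rho>, \<rho>) = (K, K - 1, \<rho>, \<rho>)"
  shows "cj (S m) (Yf (Suc K) K \<sigma> \<tau> a) = Yf (Suc K) K \<sigma> \<tau> a"
proof -
  have TF: "Yf (Suc K) K True False a = X (N (Suc K)) a" using Y_TF[of "Suc K" a] K by simp
  have FT: "Yf (Suc K) K False True a = cj (S (N (Suc K))) (X (N (Suc K)) a)" using Y_FT[of "Suc K" a] K by simp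
  have EQ: "Yf (Suc K) K \<sigma> \<sigma> a = cj (S (N K) \<otimes> S (N (Suc K))) (Yf K (K - 1) \<sigma> \<sigma> a)"
    using Y_eq[of "Suc K" \<sigma> a] K by simp
  consider "\<sigma> \<and> \<not> \<tau>" | "\<not> \<sigma> \<and> \<tau>" | "\<sigma> = \<tau>" by blast
  then show ?thesis
  proof cases
    case 1 then show ?thesis using TF cX by simp
  next
    case 2
    have "cj (S m) (cj (S (N (Suc K))) (X (N (Suc K)) a)) = cj (S (N (Suc K))) (X (N (Suc K)) a)"
      by (rule cj_comm_fix) (use cmSK cX in simp_all)
    then show ?thesis using 2 FT by simp
  next
    case 3
    have z: "cj (S m) (Yf K (K - 1) \<sigma> \<sigma> a) = Yf K (K - 1) \<sigma> \<sigma> a"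
      by (rule QQ_use[OF Q _ _ _ vm fixZ]) (use K in auto)
    have c: "S m \<otimes> (S (N K) \<otimes> S (N (Suc K))) = (S (N K) \<otimes> S (N (Suc K))) \<otimes> S m"
      using cmK cmSK by (simp add: m_assoc flip: m_assoc) (simp add: m_assoc)
    have "cj (S m) (cj (S (N K) \<otimes> S (N (Suc K))) (Yf K (K - 1) \<sigma> \<sigma> a)) = cj (S (N K) \<otimes> S (N (Suc K))) (Yf K (K - 1) \<sigma> \<sigma> a)"
      by (rule cj_comm_fix) (use c z in simp_all)
    then show ?thesis using 3 EQ by simp
  qed
qed

lemma Step3_route:
  assumes K: "2 \<le> K" "Suc K \<le> n" and Q: "QQ K" and vm: "valid n m" and adj: "adjacent n m (N K)"
    and a1: "act m (Suc K, K - 1, \<sigma>, \<sigma>) = (Suc K, i', \<sigma>, \<tau>')" and i': "1 \<le> i'" "i' < K - 1"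
  shows "cj (S m) (Yf (Suc K) K \<sigma> \<sigma> a) = Yf (Suc K) K \<sigma> \<sigma> a"
proof -
  let ?W = "Yf (Suc K) (K - 1) \<sigma> \<sigma> a" and ?V = "Yf (Suc K) i' \<sigma> \<tau>' a"
  have A: "cj (S (N K)) (Yf (Suc K) K \<sigma> \<sigma> a) = ?W" by (rule Step3_K[OF K Q])
  then have A': "Yf (Suc K) K \<sigma> \<sigma> a = cj (inv (S (N K))) ?W" by (metis cj_inv1 Yf_closed yy_closed)
  have B: "cj (S m) ?W = ?V"
    using Step2[OF K Q vm, of "K - 1" \<sigma> \<sigma> a] a1 K by simp
  have C: "cj (S (N K)) ?V = ?V"
    using Step2[OF K Q _ i'(1), of "N K" \<sigma> \<tau>' a] act_Jm1_fix[of i' "Suc K" \<sigma> \<tau>'] i' K by simp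
  have B': "cj (inv (S m)) ?V = ?W" using B by (metis cj_inv1 Yf_closed yy_closed)
  have "cj (S m) (cj (inv (S (N K))) ?W) = cj (inv (S (N K))) (cj (inv (S m)) (cj (S (N K)) (cj (S m) ?W)))"
    by (rule braid_conj_inv[OF adj]) simp
  also have "\<dots> = cj (inv (S (N K))) ?W" using B C B' by simp
  finally show ?thesis using A' by simp
qed

lemma Step3:
  assumes K: "2 \<le> K" "Suc K \<le> n" and Q: "QQ K" and vm: "valid n m"
    and fa: "fst (act m (Suc K, K, \<sigma>, \<tau>)) \<le> Suc K"
  shows "cj (S m) (Yf (Suc K) K \<sigma> \<tau> a) = Yt (act m (Suc K, K, \<sigma>, \<tau>)) a"
proof (cases m)
  case (N k)
  then have k: "2 \<le> k" "k \<le> n" using vm by auto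
  consider "K + 3 \<le> k" | "k = Suc (Suc K)" | "k = Suc K" | "k = K" | "k + 2 \<le> K" | "k + 1 = K" by linarith
  then show ?thesis
  proof cases
    case 1
    then show ?thesis using N SUP[of "Suc K" k K \<sigma> \<tau> a] act_fix_far[of "Suc K" k K \<sigma> \<tau>] K k by simp
  next
    case 2
    then show ?thesis using N act_up[of K "Suc K" \<sigma> \<tau>] fa by simp
  next
    case 3
    have act: "act m (Suc K, K, \<sigma>, \<tau>) = (Suc K, K, \<tau>, \<sigma>)" using N 3 act_swap[of "Suc K" \<sigma> \<tau>] K by simp
    have TF: "Yf (Suc K) K True False a = X (N (Suc K)) a" using Y_TF[of "Suc K" a] K by simp
    have FT: "Yf (Suc K) K False True a = cj (S (N (Suc K))) (X (N (Suc K)) a)" using Y_FT[of "Suc K" a] K by simp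
    have EQ: "Yf (Suc K) K \<sigma> \<sigma> a = cj (S (N K) \<otimes> S (N (Suc K))) (Yf K (K - 1) \<sigma> \<sigma> a)"
      using Y_eq[of "Suc K" \<sigma> a] K by simp
    have l3: "cj (S (N (Suc K))) (cj (S (N (Suc K))) (X (N (Suc K)) a)) = X (N (Suc K)) a"
      using L3self[of "N (Suc K)" a] K by (simp add: cj_cj)
    have z: "cj (S (N K)) (Yf K (K - 1) \<sigma> \<sigma> a) = Yf K (K - 1) \<sigma> \<sigma> a"
      by (rule QQ_use[OF Q]) (use K act_swap[of K \<sigma> \<sigma>] in auto)
    have br: "cj (S (N (Suc K))) (cj (S (N K)) (cj (S (N (Suc K))) (Yf K (K - 1) \<sigma> \<sigma> a)))
        = cj (S (N K)) (cj (S (N (Suc K))) (cj (S (N K)) (Yf K (K - 1) \<sigma> \<sigma> a)))"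
      by (rule braid_cj[OF adjN2[OF K]]) simp
    consider "\<sigma> \<and> \<not> \<tau>" | "\<not> \<sigma> \<and> \<tau>" | "\<sigma> = \<tau>" by blast
    then show ?thesis
    proof cases
      case 1 then show ?thesis using act N 3 TF FT by simp
    next
      case 2 then show ?thesis using act N 3 TF FT l3 by simp
    next
      case 3
      have "cj (S (N (Suc K))) (Yf (Suc K) K \<sigma> \<sigma> a) = cj (S (N (Suc K))) (cj (S (N K)) (cj (S (N (Suc K))) (Yf K (K - 1) \<sigma> \<sigma> a)))"
        using EQ by (simp add: cj_cj)
      also have "\<dots> = cj (S (N K)) (cj (S (N (Suc K))) (Yf K (K - 1) \<sigma> \<sigma> a))" using br z by simp
      also have "\<dots> = Yf (Suc K) K \<sigma> \<sigma> a" using EQ by (simp add: cj_cj)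
      finally show ?thesis using act N \<open>k = Suc K\<close> 3 by simp
    qed
  next
    case 4
    have act: "act m (Suc K, K, \<sigma>, \<tau>) = (Suc K, K - 1, \<sigma>, \<tau>)"
      using N 4 act_Jm1_top[of "Suc K" \<sigma> \<tau>] K by (simp add: numeral_2_eq_2)
    show ?thesis using act N 4 Step3_K[OF K Q] by simp
  next
    case 5
    have f1: "fsi m (Suc K, \<sigma>) = (Suc K, \<sigma>)" using N 5 k by (auto intro: fsi_low_N)
    have f2: "fsi m (K, \<tau>) = (K, \<tau>)" using N 5 k by (auto intro: fsi_low_N)
    have act: "act m (Suc K, K, \<sigma>, \<tau>) = (Suc K, K, \<sigma>, \<tau>)" by (rule act_low[OF f1 f2]) simp
    have fixZ: "act m (K, K - 1, \<rho>, \<rho>) = (K, K - 1, \<rho>, \<rho>)" for \<rho>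
      using N 5 k by (auto simp: act_simp fsi_def)
    have "cj (S m) (Yf (Suc K) K \<sigma> \<tau> a) = Yf (Suc K) K \<sigma> \<tau> a"
      by (rule Step3_fix[OF K Q vm _ _ _ fixZ])
         (use N 5 k K commNN_S[of k K] commNN_S[of k "Suc K"] commNN_X[of k "Suc K" a] in auto)
    then show ?thesis using act by simp
  next
    case 6
    have f1: "fsi m (Suc K, \<sigma>) = (Suc K, \<sigma>)" using N 6 k by (auto intro: fsi_low_N)
    have f2: "fsi m (K, \<tau>) = (K, \<tau>)" using N 6 k by (auto intro: fsi_low_N)
    have act: "act m (Suc K, K, \<sigma>, \<tau>) = (Suc K, K, \<sigma>, \<tau>)" by (rule act_low[OF f1 f2]) simp
    have adj: "adjacent n m (N K)" using N 6 adjN1[of k n] k K by auto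
    have cmSK: "S m \<otimes> S (N (Suc K)) = S (N (Suc K)) \<otimes> S m" using N 6 k K commNN_S[of k "Suc K"] by auto
    have cX: "cj (S m) (X (N (Suc K)) a) = X (N (Suc K)) a" using N 6 k K commNN_X[of k "Suc K" a] by auto
    have "cj (S m) (Yf (Suc K) K \<sigma> \<tau> a) = Yf (Suc K) K \<sigma> \<tau> a"
    proof (cases "\<sigma> = \<tau>")
      case True
      have a1: "act m (Suc K, K - 1, \<sigma>, \<sigma>) = (Suc K, K - 2, \<sigma>, \<sigma>)" using N 6 k by (auto simp: act_simp fsi_def)
      show ?thesis unfolding True[symmetric]
        by (rule Step3_route[OF K Q vm adj a1]) (use 6 k in auto)
    next
      case False
      have TF: "Yf (Suc K) K True False a = X (N (Suc K)) a" using Y_TF[of "Suc K" a] K by simp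
      have FT: "Yf (Suc K) K False True a = cj (S (N (Suc K))) (X (N (Suc K)) a)" using Y_FT[of "Suc K" a] K by simp
      have "cj (S m) (cj (S (N (Suc K))) (X (N (Suc K)) a)) = cj (S (N (Suc K))) (X (N (Suc K)) a)"
        by (rule cj_comm_fix) (use cmSK cX in simp_all)
      then show ?thesis using False TF FT cX by (cases \<sigma>) auto
    qed
    then show ?thesis using act by simp
  qed
next
  case N2'
  consider "K = 2" | "K = 3" | "4 \<le> K" using K by linarith
  then show ?thesis
  proof cases
    case 1
    have act: "act m (Suc K, K, \<sigma>, \<tau>) = (3, 1, \<sigma>, \<not> \<tau>)" using N2' 1 act_2'_32 by (simp add: numeral_3_eq_3)
    let ?Z = "Yf 2 1 \<sigma> (\<not> \<tau>) a"
    have d: "cj (S N2') (cj (S (N 3)) ?Z) = Yf 3 2 \<sigma> \<tau> a" using D3[of \<sigma> "\<not> \<tau>" a] by simp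
    have Y31: "Yf 3 1 \<sigma> (\<not> \<tau>) a = cj (S (N 3)) ?Z" using Y_rec[of 3 1 \<sigma> "\<not> \<tau>" a] by simp
    have iv: "cj (inv (S N2')) ?Z = Yf 2 1 \<tau> (\<not> \<sigma>) a"
      by (rule QQ_inv[OF Q]) (use 1 act_2'_base[of \<tau> "\<not> \<sigma>"] in auto)
    have sq: "cj (S (N 3) \<otimes> S (N 3)) (Yf 2 1 \<tau> (\<not> \<sigma>) a) = Yf 2 1 \<tau> (\<not> \<sigma>) a"
      using SQup[OF K Q, of 1 \<tau> "\<not> \<sigma>" a] 1 by (simp add: numeral_3_eq_3)
    have "cj (S N2' \<otimes> S N2') (cj (S (N 3)) ?Z) = cj (S (N 3)) ?Z"
      by (rule sqconj[OF adj2'1]) (use iv sq in simp_all)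
    then have "cj (S N2') (Yf 3 2 \<sigma> \<tau> a) = Yf 3 1 \<sigma> (\<not> \<tau>) a" using d Y31 by (simp add: cj_cj[symmetric])
    then show ?thesis using act N2' 1 by (simp add: numeral_3_eq_3)
  next
    case 2
    have f1: "fsi m (Suc K, \<sigma>) = (Suc K, \<sigma>)" using N2' 2 by (auto intro: fsi_low_2')
    have f2: "fsi m (K, \<tau>) = (K, \<tau>)" using N2' 2 by (auto intro: fsi_low_2')
    have act: "act m (Suc K, K, \<sigma>, \<tau>) = (Suc K, K, \<sigma>, \<tau>)" by (rule act_low[OF f1 f2]) simp
    have adj: "adjacent n m (N K)" using N2' 2 adj2'1 by simp
    have cmSK: "S m \<otimes> S (N (Suc K)) = S (N (Suc K)) \<otimes> S m" using N2' 2 K comm2'N_S[of "Suc K"] by auto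
    have cX: "cj (S m) (X (N (Suc K)) a) = X (N (Suc K)) a" using N2' 2 K comm2'N_X[of "Suc K" a] by auto
    have "cj (S m) (Yf (Suc K) K \<sigma> \<tau> a) = Yf (Suc K) K \<sigma> \<tau> a"
    proof (cases "\<sigma> = \<tau>")
      case True
      have a1: "act m (Suc K, K - 1, \<sigma>, \<sigma>) = (Suc K, 1, \<sigma>, \<not> \<sigma>)" using N2' 2 by (auto simp: act_simp fsi_def)
      show ?thesis unfolding True[symmetric]
        by (rule Step3_route[OF K Q vm adj a1]) (use 2 in auto)
    next
      case False
      have TF: "Yf (Suc K) K True False a = X (N (Suc K)) a" using Y_TF[of "Suc K" a] K by simp
      have FT: "Yf (Suc K) K False True a = cj (S (N (Suc K))) (X (N (Suc K)) a)" using Y_FT[of "Suc K" a] K by simp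
      have "cj (S m) (cj (S (N (Suc K))) (X (N (Suc K)) a)) = cj (S (N (Suc K))) (X (N (Suc K)) a)"
        by (rule cj_comm_fix) (use cmSK cX in simp_all)
      then show ?thesis using False TF FT cX by (cases \<sigma>) auto
    qed
    then show ?thesis using act by simp
  next
    case 3
    have f1: "fsi m (Suc K, \<sigma>) = (Suc K, \<sigma>)" using N2' 3 by (auto intro: fsi_low_2')
    have f2: "fsi m (K, \<tau>) = (K, \<tau>)" using N2' 3 by (auto intro: fsi_low_2')
    have act: "act m (Suc K, K, \<sigma>, \<tau>) = (Suc K, K, \<sigma>, \<tau>)" by (rule act_low[OF f1 f2]) simp
    have fixZ: "act m (K, K - 1, \<rho>, \<rho>) = (K, K - 1, \<rho>, \<rho>)" for \<rho>
      using N2' 3 by (auto simp: act_simp fsi_def)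
    have "cj (S m) (Yf (Suc K) K \<sigma> \<tau> a) = Yf (Suc K) K \<sigma> \<tau> a"
      by (rule Step3_fix[OF K Q vm _ _ _ fixZ])
         (use N2' 3 K comm2'N_S[of K] comm2'N_S[of "Suc K"] comm2'N_X[of "Suc K" a] in auto)
    then show ?thesis using act by simp
  qed
qed

lemma QQ_step:
  assumes Q: "QQ K" and K: "2 \<le> K" "Suc K \<le> n"
  shows "QQ (Suc K)"
  unfolding QQ_def
proof (intro allI impI)
  fix j i \<sigma> \<tau> m a
  assume h: "1 \<le> i" "i < j" "j \<le> Suc K" "valid n m" "fst (act m (j, i, \<sigma>, \<tau>)) \<le> Suc K"
  show "cj (S m) (Yf j i \<sigma> \<tau> a) = Yt (act m (j, i, \<sigma>, \<tau>)) a"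
  proof (cases "j = Suc K")
    case True
    show ?thesis
    proof (cases "i < K")
      case True
      then show ?thesis using Step2[OF K Q h(4) h(1) True] h \<open>j = Suc K\<close> by simp
    next
      case False
      then have "i = K" using h \<open>j = Suc K\<close> by simp
      then show ?thesis using Step3[OF K Q h(4)] h \<open>j = Suc K\<close> by simp
    qed
  next
    case False
    then have jK: "j < Suc K" using h by simp
    from act_step1[OF h(2) jK h(5)] K
    have "fst (act m (j, i, \<sigma>, \<tau>)) < Suc K \<or> (m = N (Suc K) \<and> j = Suc K - 1)" by simp
    then show ?thesis
    proof
      assume l: "fst (act m (j, i, \<sigma>, \<tau>)) < Suc K"
      show ?thesis using Q h l jK unfolding QQ_def by simp
    next
      assume c: "m = N (Suc K) \<and> j = Suc K - 1"
      then have act: "act m (j, i, \<sigma>, \<tau>) = (Suc K, i, \<sigma>, \<tau>)" using act_up[of i K \<sigma> \<tau>] h by simp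
      have "Yf (Suc K) i \<sigma> \<tau> a = cj (S (N (Suc K))) (Yf K i \<sigma> \<tau> a)" using Y_rec[of "Suc K" i] K h c by simp
      then show ?thesis using act c by simp
    qed
  qed
qed

lemma QQ_all: "2 \<le> J \<Longrightarrow> J \<le> n \<Longrightarrow> QQ J"
proof (induction J rule: nat_induct_at_least)
  case base then show ?case using QQ2 by simp
next
  case (Suc K) then show ?case using QQ_step by simp
qed

end


definition sg :: "bool \<Rightarrow> int" where "sg b = (if b then 1 else -1)"

definition vec2 :: "nat \<times> bool \<Rightarrow> nat \<times> bool \<Rightarrow> nat \<Rightarrow> int" where
  "vec2 p q c = (if c = fst p then sg (snd p) else 0) + (if c = fst q then sg (snd q) else 0)"

definition vec :: "nat \<times> nat \<times> bool \<times> bool \<Rightarrow> nat \<Rightarrow> int" where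
  "vec t = (case t of (j, i, \<sigma>, \<tau>) \<Rightarrow> vec2 (j, \<sigma>) (i, \<tau>))"

definition vt :: "nat \<Rightarrow> nat \<times> nat \<times> bool \<times> bool \<Rightarrow> bool" where
  "vt n t = (case t of (j, i, \<sigma>, \<tau>) \<Rightarrow> 1 \<le> i \<and> i < j \<and> j \<le> n)"

definition sw :: "nat \<Rightarrow> nat \<Rightarrow> nat" where
  "sw k c = (if c = k then k - 1 else if c = k - 1 then k else c)"

lemma refl_N: assumes "2 \<le> k" "k \<le> n" shows "refl n (N k) v = (\<lambda>c. v (sw k c))"
proof -
  have "(\<Sum>i\<in>{1..n}. v i * root (N k) i) = (\<Sum>i\<in>{1..n}. (if i = k then v i else 0) + (if i = k - 1 then - v i else 0))"
    by (rule sum.cong) (use assms in \<open>auto simp: root_def\<close>)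
  also have "\<dots> = v k - v (k - 1)" using assms by (auto simp: sum.distrib)
  finally have s: "(\<Sum>i\<in>{1..n}. v i * root (N k) i) = v k - v (k - 1)" .
  show ?thesis unfolding refl_def s using assms by (auto simp: root_def sw_def)
qed

lemma refl_2': assumes "2 \<le> n" shows "refl n N2' v = (\<lambda>c. if c = 1 then - v 2 else if c = 2 then - v 1 else v c)"
proof -
  have "(\<Sum>i\<in>{1..n}. v i * root N2' i) = (\<Sum>i\<in>{1..n}. (if i = 1 then v i else 0) + (if i = 2 then v i else 0))"
    by (rule sum.cong) (use assms in \<open>auto simp: root_def\<close>)
  also have "\<dots> = v 1 + v 2" using assms by (simp add: sum.distrib)
  finally have s: "(\<Sum>i\<in>{1..n}. v i * root N2' i) = v 1 + v 2" .
  show ?thesis unfolding refl_def s using assms by (auto simp: root_def)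
qed

lemma refl_invol: "valid n m \<Longrightarrow> 2 \<le> n \<Longrightarrow> refl n m (refl n m v) = v"
  by (cases m) (auto simp: refl_N refl_2' sw_def)

lemma vec_act: "vec (act m (j, i, \<sigma>, \<tau>)) = vec2 (fsi m (j, \<sigma>)) (fsi m (i, \<tau>))"
  by (auto simp: vec_def act_simp vec2_def split: prod.split)

lemma sg_not: "sg (\<not> b) = - sg b" by (simp add: sg_def)

lemma vec_refl: assumes "valid n m" "2 \<le> n" shows "vec (act m t) = refl n m (vec t)"
proof -
  obtain j i \<sigma> \<tau> where t: "t = (j, i, \<sigma>, \<tau>)" by (cases t) auto
  show ?thesis
  proof (cases m)
    case (N k)
    then have k: "2 \<le> k" "k \<le> n" using assms by auto
    show ?thesis unfolding t vec_act N refl_N[OF k]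
      by (rule ext) (use k in \<open>auto simp: vec_def vec2_def fsi_def sw_def\<close>)
  next
    case N2'
    show ?thesis unfolding t vec_act N2' refl_2'[OF assms(2)]
      by (rule ext) (auto simp: vec_def vec2_def fsi_def sg_not)
  qed
qed

lemma sg_ne0: "sg b \<noteq> 0" by (simp add: sg_def)
lemma sg_inj: "sg a = sg b \<longleftrightarrow> a = b" by (simp add: sg_def)
lemma sg_ne_neg: "sg a + sg b \<noteq> 0 \<or> a \<noteq> b" by (simp add: sg_def)

lemma vec_inj: assumes "vt n t" "vt n t'" "vec t = vec t'" shows "t = t'"
proof -
  obtain j i \<sigma> \<tau> where t: "t = (j, i, \<sigma>, \<tau>)" by (cases t) auto
  obtain j' i' \<sigma>' \<tau>' where t': "t' = (j', i', \<sigma>', \<tau>')" by (cases t') auto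
  have h: "\<And>c. vec2 (j, \<sigma>) (i, \<tau>) c = vec2 (j', \<sigma>') (i', \<tau>') c" using assms(3) unfolding t t' vec_def by simp
  have ij: "i < j" "i' < j'" using assms unfolding t t' vt_def by auto
  have nz: "\<And>c. vec2 (j, \<sigma>) (i, \<tau>) c \<noteq> 0 \<longleftrightarrow> c = j \<or> c = i"
    using ij by (auto simp: vec2_def sg_ne0)
  have nz': "\<And>c. vec2 (j', \<sigma>') (i', \<tau>') c \<noteq> 0 \<longleftrightarrow> c = j' \<or> c = i'"
    using ij by (auto simp: vec2_def sg_ne0)
  have a1: "j = j' \<or> j = i'" using h[of j] nz[of j] nz'[of j] by simp
  have a2: "i = j' \<or> i = i'" using h[of i] nz[of i] nz'[of i] by simp
  have a3: "j' = j \<or> j' = i" using h[of j'] nz[of j'] nz'[of j'] by simp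
  have a4: "i' = j \<or> i' = i" using h[of i'] nz[of i'] nz'[of i'] by simp
  have "j = j' \<and> i = i'" using ij a1 a2 a3 a4 by auto
  moreover have "\<sigma> = \<sigma>'" using h[of j] ij calculation by (simp add: vec2_def sg_inj)
  moreover have "\<tau> = \<tau>'" using h[of i] ij calculation by (simp add: vec2_def sg_inj)
  ultimately show ?thesis using t t' by simp
qed

lemma fsi_le: "valid n m \<Longrightarrow> 2 \<le> n \<Longrightarrow> c \<le> n \<Longrightarrow> fst (fsi m (c, s)) \<le> n"
  by (cases m) (auto simp: fsi_def)
lemma fsi_inj: "valid n m \<Longrightarrow> 1 \<le> c \<Longrightarrow> 1 \<le> d \<Longrightarrow> c \<noteq> d \<Longrightarrow> fst (fsi m (c, s)) \<noteq> fst (fsi m (d, s'))"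
  by (cases m) (auto simp: fsi_def)

lemma vt_act: assumes "vt n t" "valid n m" "2 \<le> n" shows "vt n (act m t)"
proof -
  obtain j i \<sigma> \<tau> where t: "t = (j, i, \<sigma>, \<tau>)" by (cases t) auto
  have h: "1 \<le> i" "i < j" "j \<le> n" using assms(1) t by (auto simp: vt_def)
  obtain j' \<sigma>' where f1: "fsi m (j, \<sigma>) = (j', \<sigma>')" by fastforce
  obtain i' \<tau>' where f2: "fsi m (i, \<tau>) = (i', \<tau>')" by fastforce
  have "1 \<le> j'" "1 \<le> i'" using fsi_ge1[of j n m \<sigma>] fsi_ge1[of i n m \<tau>] f1 f2 h assms by auto
  moreover have "j' \<le> n" "i' \<le> n" using fsi_le[of n m j \<sigma>] fsi_le[of n m i \<tau>] f1 f2 h assms by auto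
  moreover have "j' \<noteq> i'" using fsi_inj[of n m j i \<sigma> \<tau>] f1 f2 h assms by auto
  ultimately show ?thesis unfolding t by (auto simp: act_simp f1 f2 vt_def)
qed

lemma act_invol: assumes "vt n t" "valid n m" "2 \<le> n" shows "act m (act m t) = t"
proof (rule vec_inj[of n])
  show "vt n (act m (act m t))" using vt_act assms by blast
  show "vec (act m (act m t)) = vec t" using vec_refl[OF assms(2,3)] refl_invol[OF assms(2,3)] by simp
qed (rule assms(1))

definition actw :: "node word \<Rightarrow> nat \<times> nat \<times> bool \<times> bool \<Rightarrow> nat \<times> nat \<times> bool \<times> bool" where
  "actw w t = foldr (\<lambda>(b, k) u. act k u) w t"

lemma actw_Cons[simp]: "actw ((b, k) # w) t = act k (actw w t)" by (simp add: actw_def)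
lemma actw_Nil[simp]: "actw [] t = t" by (simp add: actw_def)

lemma to_W_Cons: "to_W n ((b, k) # w) = refl n k \<circ> to_W n w" by (simp add: to_W_def)
lemma to_W_Nil: "to_W n [] = id" by (simp add: to_W_def)
lemma to_W_append: "to_W n (u @ w) = to_W n u \<circ> to_W n w"
  by (induction u) (auto simp: to_W_Nil to_W_Cons)

lemma vt_actw: "Br_word n w \<Longrightarrow> vt n t \<Longrightarrow> 2 \<le> n \<Longrightarrow> vt n (actw w t)"
  by (induction w) (auto simp: Br_word_def intro: vt_act)

lemma to_W_vec: "Br_word n w \<Longrightarrow> vt n t \<Longrightarrow> 2 \<le> n \<Longrightarrow> to_W n w (vec t) = vec (actw w t)"
proof (induction w)
  case Nil then show ?case by (simp add: to_W_Nil)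
next
  case (Cons x w)
  obtain b k where x: "x = (b, k)" by (cases x) auto
  have bw: "Br_word n w" "valid n k" using Cons.prems x by (auto simp: Br_word_def)
  then show ?case using Cons x vec_refl[of n k "actw w t"] by (simp add: to_W_Cons)
qed

lemma pure_fix: "in_PBr n w \<Longrightarrow> vt n t \<Longrightarrow> 2 \<le> n \<Longrightarrow> actw w t = t"
  unfolding in_PBr_def using to_W_vec vec_inj vt_actw by (metis id_apply)


context brA
begin

fun ev :: "node word \<Rightarrow> 'g" where
  "ev [] = \<one>"
| "ev ((b, k) # w) = (if b then S k else inv (S k)) \<otimes> ev w"

lemma ev_closed[simp]: "ev w \<in> carrier G"
  by (induction w rule: ev.induct) auto

lemma ev_append: "ev (u @ w) = ev u \<otimes> ev w"
  by (induction u rule: ev.induct) (auto simp: m_assoc)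

lemma Yt_closed[simp]: "Yt s a \<in> carrier G" by (cases s) auto

lemma equiv_all: "vt n t \<Longrightarrow> valid n m \<Longrightarrow> cj (S m) (Yt t a) = Yt (act m t) a"
proof -
  assume h: "vt n t" "valid n m"
  obtain j i \<sigma> \<tau> where t: "t = (j, i, \<sigma>, \<tau>)" by (cases t) auto
  have n2: "2 \<le> n" using n3 by simp
  have Q: "QQ n" using QQ_all[OF n2] by simp
  have "vt n (act m t)" by (rule vt_act[OF h n2])
  then have "fst (act m t) \<le> n" by (auto simp: vt_def split: prod.splits)
  then show ?thesis using Q h t unfolding QQ_def vt_def by auto
qed

lemma equiv_w: "Br_word n w \<Longrightarrow> vt n t \<Longrightarrow> cj (ev w) (Yt t a) = Yt (actw w t) a"
proof (induction w)
  case Nil then show ?case by simp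
next
  case (Cons x w)
  obtain b k where x: "x = (b, k)" by (cases x) auto
  have bw: "Br_word n w" "valid n k" using Cons.prems x by (auto simp: Br_word_def)
  have n2: "2 \<le> n" using n3 by simp
  let ?u = "actw w t"
  have vu: "vt n ?u" by (rule vt_actw[OF bw(1) Cons.prems(2) n2])
  have IH: "cj (ev w) (Yt t a) = Yt ?u a" using Cons bw by simp
  have f: "cj (S k) (Yt ?u a) = Yt (act k ?u) a" by (rule equiv_all[OF vu bw(2)])
  have g: "cj (inv (S k)) (Yt ?u a) = Yt (act k ?u) a"
  proof -
    have "cj (S k) (Yt (act k ?u) a) = Yt (act k (act k ?u)) a" by (rule equiv_all[OF vt_act[OF vu bw(2) n2] bw(2)])
    also have "\<dots> = Yt ?u a" using act_invol[OF vu bw(2) n2] by simp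
    finally have "cj (S k) (Yt (act k ?u) a) = Yt ?u a" .
    then have "cj (inv (S k)) (Yt ?u a) = cj (inv (S k)) (cj (S k) (Yt (act k ?u) a))" by simp
    then show ?thesis by simp
  qed
  have yc: "Yt s a \<in> carrier G" for s by (cases s) auto
  show ?case using x IH f g yc by (simp add: cj_cj[symmetric])
qed

definition tk :: "node \<Rightarrow> nat \<times> nat \<times> bool \<times> bool" where
  "tk k = (case k of N j \<Rightarrow> (j, j - 1, True, False) | N2' \<Rightarrow> (2, 1, True, True))"

lemma tk_ok: "valid n k \<Longrightarrow> vt n (tk k) \<and> Yt (tk k) a = X k a"
proof (cases k)
  case (N j)
  assume "valid n k"
  then have j: "2 \<le> j" "j \<le> n" using N by auto
  then show ?thesis using N Y_TF[of j a] by (auto simp: tk_def vt_def)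
next
  case N2'
  then show ?thesis using n3 Y21 by (auto simp: tk_def vt_def)
qed

lemma X_comm_pure: assumes "in_PBr n \<omega>" "valid n k"
  shows "X k a \<otimes> ev \<omega> = ev \<omega> \<otimes> X k a"
proof -
  have n2: "2 \<le> n" using n3 by simp
  have t: "vt n (tk k)" "Yt (tk k) a = X k a" using tk_ok[OF assms(2)] by auto
  have "cj (ev \<omega>) (X k a) = X k a"
    using equiv_w[of \<omega> "tk k" a] pure_fix[OF assms(1) t(1) n2] t assms(1) by (simp add: in_PBr_def)
  then show ?thesis by (simp add: cj_fix_iff)
qed

lemma pure_conj: assumes "in_PBr n \<omega>" "valid n k" shows "in_PBr n ((True, k) # \<omega> @ [(False, k)])"
proof -
  have n2: "2 \<le> n" using n3 by simp
  have "to_W n ((True, k) # \<omega> @ [(False, k)]) = refl n k \<circ> refl n k"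
    using assms by (simp add: to_W_Cons to_W_append to_W_Nil in_PBr_def)
  also have "\<dots> = id" using refl_invol[OF assms(2) n2] by (simp add: fun_eq_iff)
  finally show ?thesis using assms by (auto simp: in_PBr_def Br_word_def)
qed

lemma main_grp1: assumes "in_PBr n \<omega>" "valid n k"
  shows "yy k a \<otimes> ev \<omega> = ev ((True, k) # \<omega> @ [(False, k)]) \<otimes> yy k a"
proof -
  let ?E = "ev ((True, k) # \<omega> @ [(False, k)])"
  have E: "?E = S k \<otimes> ev \<omega> \<otimes> inv (S k)" by (simp add: ev_append m_assoc)
  have c: "X k a \<otimes> ?E = ?E \<otimes> X k a" by (rule X_comm_pure[OF pure_conj[OF assms] assms(2)])
  have y: "yy k a = X k a \<otimes> S k" by (simp add: X_def m_assoc)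
  have "yy k a \<otimes> ev \<omega> = X k a \<otimes> ?E \<otimes> S k" unfolding y E by (simp add: m_assoc)
  also have "\<dots> = ?E \<otimes> X k a \<otimes> S k" by (simp only: c)
  also have "\<dots> = ?E \<otimes> yy k a" unfolding y by (simp add: m_assoc)
  finally show ?thesis .
qed

end

section \<open>The presented group\<close>

definition cls :: "nat \<Rightarrow> (node \<times> 'a::comm_ring_1) word \<Rightarrow> (node \<times> 'a) word set" where
  "cls n w = {v. BrA_eq n w v}"

lemma BE_refl: "BrA_eq n u u" by (simp add: BrA_eq_def pres_eq.refl)
lemma BE_sym: "BrA_eq n u v \<Longrightarrow> BrA_eq n v u" by (simp add: BrA_eq_def pres_eq.sym)
lemma BE_trans: "BrA_eq n u v \<Longrightarrow> BrA_eq n v w \<Longrightarrow> BrA_eq n u w" unfolding BrA_eq_def by (rule pres_eq.trans)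

lemma pres_ctx: "pres_eq R u v \<Longrightarrow> pres_eq R (p @ u @ q) (p @ v @ q)"
proof (induction rule: pres_eq.induct)
  case (refl u) then show ?case by (rule pres_eq.refl)
next
  case (sym u v) then show ?case by (metis pres_eq.sym)
next
  case (trans u v w) then show ?case by (metis pres_eq.trans)
next
  case (cancel u b x v)
  have "pres_eq R ((p @ u) @ [(b, x), (\<not> b, x)] @ (v @ q)) ((p @ u) @ (v @ q))" by (rule pres_eq.cancel)
  then show ?case by simp
next
  case (rel l r u v)
  have "pres_eq R ((p @ u) @ l @ (v @ q)) ((p @ u) @ r @ (v @ q))" by (rule pres_eq.rel[OF rel])
  then show ?case by simp
qed

lemma BE_app: "BrA_eq n u u' \<Longrightarrow> BrA_eq n v v' \<Longrightarrow> BrA_eq n (u @ v) (u' @ v')"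
proof -
  assume a: "BrA_eq n u u'" "BrA_eq n v v'"
  have "BrA_eq n ([] @ u @ v) ([] @ u' @ v)" using pres_ctx[of _ u u' "[]" v] a(1) by (simp add: BrA_eq_def)
  moreover have "BrA_eq n (u' @ v @ []) (u' @ v' @ [])" using pres_ctx[of _ v v' u' "[]"] a(2) by (simp add: BrA_eq_def)
  ultimately show ?thesis by (auto intro: BE_trans)
qed

lemma cls_eq: "cls n u = cls n v \<longleftrightarrow> BrA_eq n u v"
  unfolding cls_def by (auto intro: BE_trans BE_sym BE_refl)

lemma winv_Cons: "winv ((b, x) # u) = winv u @ [(\<not> b, x)]" by (simp add: winv_def)

lemma BE_winv: "BrA_eq n (winv u @ u) []"
proof (induction u)
  case Nil then show ?case by (simp add: winv_def BE_refl)
next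
  case (Cons x u)
  obtain b z where x: "x = (b, z)" by (cases x) auto
  have "pres_eq (BrA_rels n) (winv u @ [(\<not> b, z), (\<not> \<not> b, z)] @ u) (winv u @ u)" by (rule pres_eq.cancel)
  then have "BrA_eq n (winv (x # u) @ x # u) (winv u @ u)" by (simp add: x winv_Cons BrA_eq_def)
  then show ?case using Cons BE_trans by blast
qed

definition BG :: "nat \<Rightarrow> ((node \<times> 'a::comm_ring_1) word set) monoid" where
  "BG n = \<lparr>carrier = range (cls n), mult = (\<lambda>A B. {w. \<exists>u\<in>A. \<exists>v\<in>B. BrA_eq n (u @ v) w}), one = cls n []\<rparr>"

lemma BG_mult: "cls n u \<otimes>\<^bsub>BG n\<^esub> cls n v = cls n (u @ v)"
  unfolding BG_def cls_def by (auto intro: BE_trans BE_app BE_sym BE_refl)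

lemma BG_one: "\<one>\<^bsub>BG n\<^esub> = cls n []" by (simp add: BG_def)
lemma BG_carrier: "carrier (BG n) = range (cls n)" by (simp add: BG_def)

lemma group_BG: "group (BG n :: ((node \<times> 'a::comm_ring_1) word set) monoid)"
proof (rule groupI)
  fix x1 x2 :: "(node \<times> 'a) word set" assume "x1 \<in> carrier (BG n)" "x2 \<in> carrier (BG n)"
  then show "x1 \<otimes>\<^bsub>BG n\<^esub> x2 \<in> carrier (BG n)" by (auto simp: BG_carrier BG_mult)
next
  show "\<one>\<^bsub>BG n\<^esub> \<in> carrier (BG n)" by (simp add: BG_carrier BG_one)
next
  fix x1 x2 x3 :: "(node \<times> 'a) word set" assume "x1 \<in> carrier (BG n)" "x2 \<in> carrier (BG n)" "x3 \<in> carrier (BG n)"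
  then show "x1 \<otimes>\<^bsub>BG n\<^esub> x2 \<otimes>\<^bsub>BG n\<^esub> x3 = x1 \<otimes>\<^bsub>BG n\<^esub> (x2 \<otimes>\<^bsub>BG n\<^esub> x3)" by (auto simp: BG_carrier BG_mult)
next
  fix x :: "(node \<times> 'a) word set" assume "x \<in> carrier (BG n)"
  then show "\<one>\<^bsub>BG n\<^esub> \<otimes>\<^bsub>BG n\<^esub> x = x" by (auto simp: BG_carrier BG_mult BG_one)
next
  fix x :: "(node \<times> 'a) word set" assume "x \<in> carrier (BG n)"
  then obtain u where u: "x = cls n u" by (auto simp: BG_carrier)
  have "cls n (winv u) \<otimes>\<^bsub>BG n\<^esub> x = \<one>\<^bsub>BG n\<^esub>" using BE_winv[of n u] by (simp add: u BG_mult BG_one cls_eq)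
  then show "\<exists>y\<in>carrier (BG n). y \<otimes>\<^bsub>BG n\<^esub> x = \<one>\<^bsub>BG n\<^esub>" by (auto simp: BG_carrier)
qed

lemma BG_inv: "inv\<^bsub>BG n\<^esub> (cls n u) = cls n (winv (u :: (node \<times> 'a::comm_ring_1) word))"
proof -
  interpret group "BG n" by (rule group_BG)
  have "cls n (winv u) \<otimes>\<^bsub>BG n\<^esub> cls n u = \<one>\<^bsub>BG n\<^esub>" using BE_winv[of n u] by (simp add: BG_mult BG_one cls_eq)
  then show ?thesis by (intro inv_equality) (auto simp: BG_carrier)
qed

lemma rel_eq: "(l, r) \<in> BrA_rels n \<Longrightarrow> cls n l = cls n r"
  using pres_eq.rel[of l r "BrA_rels n" "[]" "[]"] by (simp add: cls_eq BrA_eq_def)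

lemma brA_BG: assumes "3 \<le> n" shows "brA (BG n) n (\<lambda>k (a::'a::comm_ring_1). cls n (y k a))"
proof -
  interpret group "BG n" by (rule group_BG)
  show ?thesis
  proof (unfold_locales)
    fix k and a :: 'a show "cls n (y k a) \<in> carrier (BG n)" by (simp add: BG_carrier)
  next
    fix k and a b :: 'a assume "valid n k"
    then have "(y k a @ y k 0 @ y k b, y k 0 @ y k 0 @ y k (a + b)) \<in> BrA_rels n" unfolding BrA_rels_def by (intro UnI1) blast
    then show "cls n (y k a) \<otimes>\<^bsub>BG n\<^esub> cls n (y k 0) \<otimes>\<^bsub>BG n\<^esub> cls n (y k b) = cls n (y k 0) \<otimes>\<^bsub>BG n\<^esub> cls n (y k 0) \<otimes>\<^bsub>BG n\<^esub> cls n (y k (a + b))"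
      by (simp add: BG_mult rel_eq)
  next
    fix k l and a b :: 'a assume "valid n k" "valid n l" "k \<noteq> l" "\<not> adjacent n k l"
    then have "(y k a @ y l b, y l b @ y k a) \<in> BrA_rels n" unfolding BrA_rels_def by (intro UnI1 UnI2) blast
    then show "cls n (y k a) \<otimes>\<^bsub>BG n\<^esub> cls n (y l b) = cls n (y l b) \<otimes>\<^bsub>BG n\<^esub> cls n (y k a)"
      by (simp add: BG_mult rel_eq)
  next
    fix k l and a b c :: 'a assume "adj_lt n k l"
    then have "(y k a @ y l b @ y k c, y l c @ y k (b + a * c) @ y l a) \<in> BrA_rels n" unfolding BrA_rels_def by (intro UnI2) blast
    then show "cls n (y k a) \<otimes>\<^bsub>BG n\<^esub> cls n (y l b) \<otimes>\<^bsub>BG n\<^esub> cls n (y k c) = cls n (y l c) \<otimes>\<^bsub>BG n\<^esub> cls n (y k (b + a * c)) \<otimes>\<^bsub>BG n\<^esub> cls n (y l a)"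
      by (simp add: BG_mult rel_eq)
  qed (rule assms)
qed

theorem lemma3p9:
  fixes n :: nat and k :: node and \<omega> :: "node word"
  assumes "3 \<le> n" and "valid n k" and "in_PBr n \<omega>"
  shows "(\<exists>\<omega>'. Br_word n \<omega>' \<and>
            (\<forall>a :: 'a :: comm_ring_1. BrA_eq n (y k a @ emb \<omega>) (emb \<omega>' @ y k a)))
       \<and> (\<forall>a :: 'a. BrA_eq n (y k a @ winv (y k 0) @ emb \<omega>)
                               (emb \<omega> @ y k a @ winv (y k 0)))"
proof -
  interpret B: brA "BG n" n "\<lambda>k (a::'a). cls n (y k a)" by (rule brA_BG[OF assms(1)])
  have ev: "B.ev w = cls n (emb w :: (node \<times> 'a) word)" for w
  proof (induction w)
    case Nil then show ?case by (simp add: BG_one emb_def)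
  next
    case (Cons x w)
    obtain b z where x: "x = (b, z)" by (cases x) auto
    have e1: "B.ev ((b, z) # w) = cls n (if b then y z 0 else winv (y z 0)) \<otimes>\<^bsub>BG n\<^esub> B.ev w"
      by (simp add: BG_inv)
    show ?case using Cons e1 by (simp add: x BG_mult emb_def y_def winv_def)
  qed
  have X: "B.X k a = cls n (y k a @ winv (y k 0))" for a :: 'a
    by (simp add: B.X_def BG_inv BG_mult)
  let ?w = "(True, k) # \<omega> @ [(False, k)]"
  have bw: "Br_word n ?w" using assms by (auto simp: in_PBr_def Br_word_def)
  have p1: "\<forall>a :: 'a. BrA_eq n (y k a @ emb \<omega>) (emb ?w @ y k a)"
  proof
    fix a :: 'a
    have "cls n (y k a) \<otimes>\<^bsub>BG n\<^esub> B.ev \<omega> = B.ev ?w \<otimes>\<^bsub>BG n\<^esub> cls n (y k a)"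
      by (rule B.main_grp1[OF assms(3) assms(2)])
    then show "BrA_eq n (y k a @ emb \<omega>) (emb ?w @ y k a)" by (simp add: ev BG_mult cls_eq)
  qed
  have p2: "\<forall>a :: 'a. BrA_eq n (y k a @ winv (y k 0) @ emb \<omega>) (emb \<omega> @ y k a @ winv (y k 0))"
  proof
    fix a :: 'a
    have "B.X k a \<otimes>\<^bsub>BG n\<^esub> B.ev \<omega> = B.ev \<omega> \<otimes>\<^bsub>BG n\<^esub> B.X k a"
      by (rule B.X_comm_pure[OF assms(3) assms(2)])
    then show "BrA_eq n (y k a @ winv (y k 0) @ emb \<omega>) (emb \<omega> @ y k a @ winv (y k 0))"
      by (simp add: ev X BG_mult cls_eq)
  qed
  show ?thesis using p1 p2 bw by blast
qed

end
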